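(* Let $0\le l\le n$ and let $(S_1,\dots,S_l,U_{l+1},\dots,U_n)$ be an $n$-tuple of doubly non-commuting isometries on a Hilbert space $H$, where $S_1,\dots,S_l$ are pure isometries and $U_{l+1},\dots,U_n$ are unitary. Then there exist a Hilbert space $\mathcal K\supseteq H$, with orthogonal projection $P_H:\mathcal K\to H$, and unitary operators $\mathcal U_1,\dots,\mathcal U_n$ on $\mathcal K$ such that: (1) $(\mathcal U_1,\dots,\mathcal U_n)$ is an $n$-tuple of doubly non-commuting isometries; (2) $\mathcal U_1,\dots,\mathcal U_n$ leave $H$ invariant; (3) the restrictions of $\mathcal U_1,\dots,\mathcal U_n$ to $H$ are $S_1,\dots,S_l,U_{l+1},\dots,U_n$ respectively; (4) $\mathcal U_{l+1}^*,\dots,\mathcal U_n^*$ leave $H$ invariant; (5) the restrictions of $\mathcal U_{l+1}^*,\dots,\mathcal U_n^*$ to $H$ are $U_{l+1}^*,\dots,U_n^*$ respectively; (6) $S_i^*=(P_H\circ\mathcal U_i^* )|_H$ for $i=1,\dots,l$. (Lists whose lower index exceeds the upper index are empty.)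
   Context: Fix $n\ge1$ and $z_{ij}\in\mathbb T$ for $i\ne j$ in $\{1,\dots,n\}$ with $z_{ji}=\overline{z_{ij}}$. An $n$-tuple $(V_1,\dots,V_n)$ of isometries is doubly non-commuting if $V_i^*V_j=\overline{z_{ij}}V_jV_i^*$ for all $i\neq j$. An isometry $S$ on $H$ is a pure isometry if $\{0\}$ is the only $S$-invariant subspace of $H$ on which $S$ acts unitarily. *)

theory Defs
  imports Complex_Main
begin

text \<open>Convention: the inner product is linear in the first and conjugate-linear in the
  second argument.\<close>

record 'a cspace =
  hcarrier :: "'a set"
  hadd :: "'a \<Rightarrow> 'a \<Rightarrow> 'a"
  hscale :: "complex \<Rightarrow> 'a \<Rightarrow> 'a"
  hzero :: "'a"
  hip :: "'a \<Rightarrow> 'a \<Rightarrow> complex"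

definition hminus :: "'a cspace \<Rightarrow> 'a \<Rightarrow> 'a \<Rightarrow> 'a" where
  "hminus K x y = hadd K x (hscale K (-1) y)"

definition hnorm :: "'a cspace \<Rightarrow> 'a \<Rightarrow> real" where
  "hnorm K x = sqrt (Re (hip K x x))"

definition hdist :: "'a cspace \<Rightarrow> 'a \<Rightarrow> 'a \<Rightarrow> real" where
  "hdist K x y = hnorm K (hminus K x y)"

definition chilbert :: "'a cspace \<Rightarrow> bool" where
  "chilbert K \<longleftrightarrow>
     (let C = hcarrier K in
      hzero K \<in> C \<and>
      (\<forall>x\<in>C. \<forall>y\<in>C. hadd K x y \<in> C) \<and>
      (\<forall>a. \<forall>x\<in>C. hscale K a x \<in> C) \<and>
      (\<forall>x\<in>C. \<forall>y\<in>C. \<forall>z\<in>C. hadd K (hadd K x y) z = hadd K x (hadd K y z)) \<and>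
      (\<forall>x\<in>C. \<forall>y\<in>C. hadd K x y = hadd K y x) \<and>
      (\<forall>x\<in>C. hadd K x (hzero K) = x) \<and>
      (\<forall>x\<in>C. hadd K x (hscale K (-1) x) = hzero K) \<and>
      (\<forall>x\<in>C. hscale K 1 x = x) \<and>
      (\<forall>a b. \<forall>x\<in>C. hscale K a (hscale K b x) = hscale K (a * b) x) \<and>
      (\<forall>a b. \<forall>x\<in>C. hscale K (a + b) x = hadd K (hscale K a x) (hscale K b x)) \<and>
      (\<forall>a. \<forall>x\<in>C. \<forall>y\<in>C. hscale K a (hadd K x y) = hadd K (hscale K a x) (hscale K a y)) \<and>
      (\<forall>x\<in>C. \<forall>y\<in>C. \<forall>z\<in>C. hip K (hadd K x y) z = hip K x z + hip K y z) \<and>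
      (\<forall>a. \<forall>x\<in>C. \<forall>y\<in>C. hip K (hscale K a x) y = a * hip K x y) \<and>
      (\<forall>x\<in>C. \<forall>y\<in>C. hip K y x = cnj (hip K x y)) \<and>
      (\<forall>x\<in>C. Im (hip K x x) = 0 \<and> Re (hip K x x) \<ge> 0) \<and>
      (\<forall>x\<in>C. hip K x x = 0 \<longrightarrow> x = hzero K) \<and>
      (\<forall>f. (\<forall>k. f k \<in> C) \<and>
           (\<forall>e>0. \<exists>N. \<forall>m\<ge>N. \<forall>k\<ge>N. hdist K (f m) (f k) < e) \<longrightarrow>
           (\<exists>x\<in>C. (\<lambda>k. hdist K (f k) x) \<longlonglongrightarrow> 0)))"

definition lin_op :: "'a cspace \<Rightarrow> ('a \<Rightarrow> 'a) \<Rightarrow> bool" where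
  "lin_op K T \<longleftrightarrow>
     (\<forall>x\<in>hcarrier K. T x \<in> hcarrier K) \<and>
     (\<forall>x\<in>hcarrier K. \<forall>y\<in>hcarrier K. T (hadd K x y) = hadd K (T x) (T y)) \<and>
     (\<forall>a. \<forall>x\<in>hcarrier K. T (hscale K a x) = hscale K a (T x))"

definition isometry :: "'a cspace \<Rightarrow> ('a \<Rightarrow> 'a) \<Rightarrow> bool" where
  "isometry K T \<longleftrightarrow> lin_op K T \<and> (\<forall>x\<in>hcarrier K. hnorm K (T x) = hnorm K x)"

definition unitary :: "'a cspace \<Rightarrow> ('a \<Rightarrow> 'a) \<Rightarrow> bool" where
  "unitary K T \<longleftrightarrow> isometry K T \<and> T ` hcarrier K = hcarrier K"

text \<open>Adjoint (only its values on the carrier matter).\<close>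

definition is_adjoint :: "'a cspace \<Rightarrow> ('a \<Rightarrow> 'a) \<Rightarrow> ('a \<Rightarrow> 'a) \<Rightarrow> bool" where
  "is_adjoint K T T' \<longleftrightarrow>
     (\<forall>y\<in>hcarrier K. T' y \<in> hcarrier K) \<and>
     (\<forall>x\<in>hcarrier K. \<forall>y\<in>hcarrier K. hip K (T x) y = hip K x (T' y))"

definition adj :: "'a cspace \<Rightarrow> ('a \<Rightarrow> 'a) \<Rightarrow> ('a \<Rightarrow> 'a)" where
  "adj K T = (SOME T'. is_adjoint K T T')"

definition closed_subspace :: "'a cspace \<Rightarrow> 'a set \<Rightarrow> bool" where
  "closed_subspace K M \<longleftrightarrow>
     M \<subseteq> hcarrier K \<and> hzero K \<in> M \<and>
     (\<forall>x\<in>M. \<forall>y\<in>M. hadd K x y \<in> M) \<and>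
     (\<forall>a. \<forall>x\<in>M. hscale K a x \<in> M) \<and>
     (\<forall>f x. (\<forall>k. f k \<in> M) \<and> x \<in> hcarrier K \<and> (\<lambda>k. hdist K (f k) x) \<longlonglongrightarrow> 0 \<longrightarrow> x \<in> M)"

definition pure_isometry :: "'a cspace \<Rightarrow> ('a \<Rightarrow> 'a) \<Rightarrow> bool" where
  "pure_isometry K S \<longleftrightarrow> isometry K S \<and>
     (\<forall>M. closed_subspace K M \<and> S ` M = M \<longrightarrow> M = {hzero K})"

definition orth_proj :: "'a cspace \<Rightarrow> 'a set \<Rightarrow> 'a \<Rightarrow> 'a" where
  "orth_proj K M w = (SOME p. p \<in> M \<and> (\<forall>m\<in>M. hip K (hminus K w p) m = 0))"

definition dnc_isometries ::
  "'a cspace \<Rightarrow> (nat \<Rightarrow> nat \<Rightarrow> complex) \<Rightarrow> nat \<Rightarrow> (nat \<Rightarrow> 'a \<Rightarrow> 'a) \<Rightarrow> bool" where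
  "dnc_isometries K z n V \<longleftrightarrow>
     (\<forall>i\<in>{1..n}. isometry K (V i)) \<and>
     (\<forall>i\<in>{1..n}. \<forall>j\<in>{1..n}. i \<noteq> j \<longrightarrow>
        (\<forall>x\<in>hcarrier K. adj K (V i) (V j x) = hscale K (cnj (z i j)) (V j (adj K (V i) x))))"

definition isometric_embedding :: "'a cspace \<Rightarrow> 'b cspace \<Rightarrow> ('a \<Rightarrow> 'b) \<Rightarrow> bool" where
  "isometric_embedding H K J \<longleftrightarrow>
     (\<forall>x\<in>hcarrier H. J x \<in> hcarrier K) \<and>
     (\<forall>x\<in>hcarrier H. \<forall>y\<in>hcarrier H. J (hadd H x y) = hadd K (J x) (J y)) \<and>
     (\<forall>a. \<forall>x\<in>hcarrier H. J (hscale H a x) = hscale K a (J x)) \<and>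
     (\<forall>x\<in>hcarrier H. \<forall>y\<in>hcarrier H. hip K (J x) (J y) = hip H x y)"

end

theory Submission
  imports Defs
begin


locale hs =
  fixes K :: "'a cspace"
  assumes ch: "chilbert K"
begin

abbreviation "C \<equiv> hcarrier K"

lemmas chU = ch[unfolded chilbert_def Let_def]

lemma zero_in[simp]: "hzero K \<in> C" using chU[THEN conjunct1] by blast
lemma add_in[simp]: "x \<in> C \<Longrightarrow> y \<in> C \<Longrightarrow> hadd K x y \<in> C" using chU[THEN conjunct2, THEN conjunct1] by blast
lemma scale_in[simp]: "x \<in> C \<Longrightarrow> hscale K a x \<in> C" using chU[THEN conjunct2, THEN conjunct2, THEN conjunct1] by blast
lemma add_assoc: "x \<in> C \<Longrightarrow> y \<in> C \<Longrightarrow> z \<in> C \<Longrightarrow> hadd K (hadd K x y) z = hadd K x (hadd K y z)"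
  using chU[THEN conjunct2, THEN conjunct2, THEN conjunct2, THEN conjunct1] by blast
lemma add_comm: "x \<in> C \<Longrightarrow> y \<in> C \<Longrightarrow> hadd K x y = hadd K y x"
  using chU[THEN conjunct2, THEN conjunct2, THEN conjunct2, THEN conjunct2, THEN conjunct1] by blast
lemma add_zero[simp]: "x \<in> C \<Longrightarrow> hadd K x (hzero K) = x"
  using chU[THEN conjunct2, THEN conjunct2, THEN conjunct2, THEN conjunct2, THEN conjunct2, THEN conjunct1] by blast
lemma add_neg: "x \<in> C \<Longrightarrow> hadd K x (hscale K (-1) x) = hzero K"
  using chU[THEN conjunct2, THEN conjunct2, THEN conjunct2, THEN conjunct2, THEN conjunct2, THEN conjunct2, THEN conjunct1] by blast
lemma ip_add_left[simp]: "x \<in> C \<Longrightarrow> y \<in> C \<Longrightarrow> z \<in> C \<Longrightarrow> hip K (hadd K x y) z = hip K x z + hip K y z"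
  using chU[THEN conjunct2, THEN conjunct2, THEN conjunct2, THEN conjunct2, THEN conjunct2, THEN conjunct2, THEN conjunct2, THEN conjunct2, THEN conjunct2, THEN conjunct2, THEN conjunct2, THEN conjunct1] by blast
lemma ip_scale_left[simp]: "x \<in> C \<Longrightarrow> y \<in> C \<Longrightarrow> hip K (hscale K a x) y = a * hip K x y"
  using chU[THEN conjunct2, THEN conjunct2, THEN conjunct2, THEN conjunct2, THEN conjunct2, THEN conjunct2, THEN conjunct2, THEN conjunct2, THEN conjunct2, THEN conjunct2, THEN conjunct2, THEN conjunct2, THEN conjunct1] by blast
lemma ip_sym: "x \<in> C \<Longrightarrow> y \<in> C \<Longrightarrow> hip K y x = cnj (hip K x y)"
  using chU[THEN conjunct2, THEN conjunct2, THEN conjunct2, THEN conjunct2, THEN conjunct2, THEN conjunct2, THEN conjunct2, THEN conjunct2, THEN conjunct2, THEN conjunct2, THEN conjunct2, THEN conjunct2, THEN conjunct2, THEN conjunct1] by blast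
lemma ip_Im: "x \<in> C \<Longrightarrow> Im (hip K x x) = 0"
  using chU[THEN conjunct2, THEN conjunct2, THEN conjunct2, THEN conjunct2, THEN conjunct2, THEN conjunct2, THEN conjunct2, THEN conjunct2, THEN conjunct2, THEN conjunct2, THEN conjunct2, THEN conjunct2, THEN conjunct2, THEN conjunct2, THEN conjunct1] by blast
lemma ip_Re: "x \<in> C \<Longrightarrow> Re (hip K x x) \<ge> 0"
  using chU[THEN conjunct2, THEN conjunct2, THEN conjunct2, THEN conjunct2, THEN conjunct2, THEN conjunct2, THEN conjunct2, THEN conjunct2, THEN conjunct2, THEN conjunct2, THEN conjunct2, THEN conjunct2, THEN conjunct2, THEN conjunct2, THEN conjunct1] by blast
lemma ip_def0: "x \<in> C \<Longrightarrow> hip K x x = 0 \<Longrightarrow> x = hzero K"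
  using chU[THEN conjunct2, THEN conjunct2, THEN conjunct2, THEN conjunct2, THEN conjunct2, THEN conjunct2, THEN conjunct2, THEN conjunct2, THEN conjunct2, THEN conjunct2, THEN conjunct2, THEN conjunct2, THEN conjunct2, THEN conjunct2, THEN conjunct2, THEN conjunct1] by blast
lemma complete: "(\<forall>k. f k \<in> C) \<Longrightarrow> (\<forall>e>0. \<exists>N. \<forall>m\<ge>N. \<forall>k\<ge>N. hdist K (f m) (f k) < e) \<Longrightarrow>
           (\<exists>x\<in>C. (\<lambda>k. hdist K (f k) x) \<longlonglongrightarrow> 0)"
  using chU[THEN conjunct2, THEN conjunct2, THEN conjunct2, THEN conjunct2, THEN conjunct2, THEN conjunct2, THEN conjunct2, THEN conjunct2, THEN conjunct2, THEN conjunct2, THEN conjunct2, THEN conjunct2, THEN conjunct2, THEN conjunct2, THEN conjunct2, THEN conjunct2] by blast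

lemma ip_cnj: "x \<in> C \<Longrightarrow> y \<in> C \<Longrightarrow> cnj (hip K x y) = hip K y x"
  using ip_sym[of x y] by simp
lemma ip_add_right[simp]: "x \<in> C \<Longrightarrow> y \<in> C \<Longrightarrow> z \<in> C \<Longrightarrow> hip K z (hadd K x y) = hip K z x + hip K z y"
  using ip_sym[of "hadd K x y" z] by (simp add: ip_cnj)
lemma ip_scale_right[simp]: "x \<in> C \<Longrightarrow> y \<in> C \<Longrightarrow> hip K y (hscale K a x) = cnj a * hip K y x"
  using ip_sym[of "hscale K a x" y] by (simp add: ip_cnj)
lemma ip_zero_left[simp]: "y \<in> C \<Longrightarrow> hip K (hzero K) y = 0"
proof -
  assume y: "y \<in> C"
  have "hip K (hzero K) y = hip K (hadd K y (hscale K (-1) y)) y" by (simp add: add_neg y)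
  also have "\<dots> = 0" using y by simp
  finally show ?thesis .
qed
lemma ip_zero_right[simp]: "y \<in> C \<Longrightarrow> hip K y (hzero K) = 0"
  using ip_sym[of "hzero K" y] by simp

lemma minus_in[simp]: "x \<in> C \<Longrightarrow> y \<in> C \<Longrightarrow> hminus K x y \<in> C" by (simp add: hminus_def)
lemma ip_minus_left[simp]: "x \<in> C \<Longrightarrow> y \<in> C \<Longrightarrow> z \<in> C \<Longrightarrow> hip K (hminus K x y) z = hip K x z - hip K y z"
  by (simp add: hminus_def)
lemma ip_minus_right[simp]: "x \<in> C \<Longrightarrow> y \<in> C \<Longrightarrow> z \<in> C \<Longrightarrow> hip K z (hminus K x y) = hip K z x - hip K z y"
  by (simp add: hminus_def)

lemma eq_of_minus: assumes x: "x \<in> C" and y: "y \<in> C" and h: "hminus K x y = hzero K" shows "x = y"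
proof -
  have "x = hadd K x (hadd K (hscale K (-1) y) y)"
    using add_neg[OF y] add_comm[of y "hscale K (-1) y"] x y by simp
  also have "\<dots> = hadd K (hminus K x y) y" using add_assoc x y by (simp add: hminus_def)
  also have "\<dots> = y" using h y add_comm[of "hzero K" y] by simp
  finally show ?thesis .
qed

lemma vec_eqI: assumes x: "x \<in> C" and y: "y \<in> C" and h: "\<And>w. w \<in> C \<Longrightarrow> hip K x w = hip K y w"
  shows "x = y"
proof -
  have "hip K (hminus K x y) (hminus K x y) = 0" using h x y by simp
  then show ?thesis using eq_of_minus ip_def0 x y by simp
qed

lemma vec_eqI2: assumes x: "x \<in> C" and y: "y \<in> C" and h: "\<And>w. w \<in> C \<Longrightarrow> hip K w x = hip K w y"
  shows "x = y"
proof (rule vec_eqI[OF x y])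
  fix w assume w: "w \<in> C"
  have "hip K w x = hip K w y" using h w .
  then show "hip K x w = hip K y w" using ip_sym[OF w x] ip_sym[OF w y] by simp
qed

lemma ip_self: "x \<in> C \<Longrightarrow> hip K x x = complex_of_real ((hnorm K x)^2)"
  using ip_Im[of x] ip_Re[of x] unfolding hnorm_def by (simp add: complex_eq_iff)

lemma hnorm_nonneg: "x \<in> C \<Longrightarrow> hnorm K x \<ge> 0" using ip_Re[of x] by (simp add: hnorm_def)

lemma hnorm_sq: "x \<in> C \<Longrightarrow> (hnorm K x)^2 = Re (hip K x x)"
  using ip_Re[of x] unfolding hnorm_def by (simp add: real_sqrt_pow2)

lemma hnorm_zero_iff: "x \<in> C \<Longrightarrow> hnorm K x = 0 \<longleftrightarrow> x = hzero K"
  using ip_self[of x] ip_def0[of x] by auto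

lemma hnorm_zero[simp]: "hnorm K (hzero K) = 0" by (simp add: hnorm_def)

lemma ip_cmod_sq: "x \<in> C \<Longrightarrow> y \<in> C \<Longrightarrow> cmod (hip K x y) ^ 2 = hip K x y * hip K y x"
  using ip_sym[of x y] by (metis complex_norm_square of_real_power)

lemma cauchy_schwarz: assumes x: "x \<in> C" and y: "y \<in> C"
  shows "cmod (hip K x y) \<le> hnorm K x * hnorm K y"
proof (cases "y = hzero K")
  case True then show ?thesis using x hnorm_nonneg[OF x] by simp
next
  case False
  define a where "a = hip K x y"
  define r where "r = (hnorm K y)^2"
  define t where "t = a / complex_of_real r"
  have yy: "hip K y y = complex_of_real r" using ip_self y r_def by simp
  have yx: "hip K y x = cnj a" using ip_sym[OF x y] a_def by simp
  have ny: "hnorm K y > 0" using False hnorm_zero_iff y hnorm_nonneg[OF y] by (metis less_eq_real_def)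
  have rpos: "r > 0" using ny r_def by simp
  have aa: "a * cnj a = complex_of_real ((cmod a)^2)" by (metis complex_norm_square of_real_power)
  have e: "hip K (hminus K x (hscale K t y)) (hminus K x (hscale K t y))
     = hip K x x - cnj t * a - t * cnj a + t * cnj t * complex_of_real r"
    using x y yy yx a_def by (simp add: algebra_simps)
  also have "\<dots> = hip K x x - a * cnj a / complex_of_real r"
    using rpos unfolding t_def by (simp add: field_simps)
  also have "\<dots> = complex_of_real ((hnorm K x)^2 - (cmod a)^2 / r)"
    using ip_self[OF x] aa by simp
  finally have "0 \<le> (hnorm K x)^2 - (cmod a)^2 / r"
    using ip_Re[of "hminus K x (hscale K t y)"] x y by simp
  then have "(cmod a)^2 \<le> (hnorm K x * hnorm K y)^2"
    using rpos r_def by (simp add: field_simps power_mult_distrib)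
  then show ?thesis using power2_le_imp_le a_def hnorm_nonneg[OF x] hnorm_nonneg[OF y] by simp
qed

end

context hs begin

lemma scale_zero[simp]: "x \<in> C \<Longrightarrow> hscale K 0 x = hzero K"
  by (rule vec_eqI) simp_all
lemma scale_of_zero[simp]: "hscale K a (hzero K) = hzero K"
  by (rule vec_eqI) simp_all
lemma add_zero_left[simp]: "x \<in> C \<Longrightarrow> hadd K (hzero K) x = x"
  by (rule vec_eqI) simp_all

lemma norm_sq_add: "x \<in> C \<Longrightarrow> y \<in> C \<Longrightarrow>
   (hnorm K (hadd K x y))^2 = (hnorm K x)^2 + (hnorm K y)^2 + 2 * Re (hip K x y)"
  using hnorm_sq ip_sym[of x y] by simp

lemma norm_sq_minus: "x \<in> C \<Longrightarrow> y \<in> C \<Longrightarrow>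
   (hnorm K (hminus K x y))^2 = (hnorm K x)^2 + (hnorm K y)^2 - 2 * Re (hip K x y)"
  using hnorm_sq ip_sym[of x y] by simp

lemma hnorm_scale: "x \<in> C \<Longrightarrow> hnorm K (hscale K a x) = cmod a * hnorm K x"
proof -
  assume x: "x \<in> C"
  have "hip K (hscale K a x) (hscale K a x) = (a * cnj a) * hip K x x" using x by simp
  also have "\<dots> = complex_of_real ((cmod a * hnorm K x)^2)"
    using ip_self[OF x] by (simp add: complex_norm_square[symmetric] power_mult_distrib)
  finally show ?thesis using hnorm_nonneg[OF x] unfolding hnorm_def[of K "hscale K a x"] by simp
qed

lemma triangle: assumes x: "x \<in> C" and y: "y \<in> C"
  shows "hnorm K (hadd K x y) \<le> hnorm K x + hnorm K y"
proof -
  have "Re (hip K x y) \<le> hnorm K x * hnorm K y"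
    using cauchy_schwarz[OF x y] complex_Re_le_cmod order_trans by blast
  then have "(hnorm K (hadd K x y))^2 \<le> (hnorm K x + hnorm K y)^2"
    using norm_sq_add[OF x y] by (simp add: power2_sum)
  then show ?thesis using hnorm_nonneg x y power2_le_imp_le by simp
qed

lemma hdist_nonneg: "x \<in> C \<Longrightarrow> y \<in> C \<Longrightarrow> hdist K x y \<ge> 0"
  by (simp add: hdist_def hnorm_nonneg)

lemma minus_swap: "x \<in> C \<Longrightarrow> y \<in> C \<Longrightarrow> hminus K y x = hscale K (-1) (hminus K x y)"
  by (rule vec_eqI) (simp_all add: algebra_simps)

lemma hdist_sym: "x \<in> C \<Longrightarrow> y \<in> C \<Longrightarrow> hdist K x y = hdist K y x"
  by (simp add: hdist_def minus_swap[of x y] hnorm_scale)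

lemma hdist_triangle: assumes x: "x \<in> C" and y: "y \<in> C" and z: "z \<in> C"
  shows "hdist K x z \<le> hdist K x y + hdist K y z"
proof -
  have "hminus K x z = hadd K (hminus K x y) (hminus K y z)"
    using x y z by (intro vec_eqI) simp_all
  then show ?thesis unfolding hdist_def using triangle x y z by simp
qed



lemma minus_self[simp]: "x \<in> C \<Longrightarrow> hminus K x x = hzero K"
  by (rule vec_eqI) simp_all

lemma hdist_zero_iff: assumes x: "x \<in> C" and y: "y \<in> C" shows "hdist K x y = 0 \<longleftrightarrow> x = y"
proof
  assume "hdist K x y = 0"
  then have "hminus K x y = hzero K" using hnorm_zero_iff[of "hminus K x y"] x y by (simp add: hdist_def)
  then show "x = y" using eq_of_minus x y by blast
next
  assume "x = y" then show "hdist K x y = 0" using x by (simp add: hdist_def)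
qed

lemma norm_diff_le: assumes x: "x \<in> C" and y: "y \<in> C"
  shows "\<bar>hnorm K x - hnorm K y\<bar> \<le> hdist K x y"
proof -
  have "hnorm K x = hdist K x (hzero K)"
    using x by (simp add: hdist_def hminus_def)
  moreover have "hnorm K y = hdist K y (hzero K)"
    using y by (simp add: hdist_def hminus_def)
  ultimately show ?thesis using hdist_triangle[of x y "hzero K"] hdist_triangle[of y x "hzero K"]
      hdist_sym[OF x y] x y by simp
qed

lemma lim_unique: assumes f: "\<forall>k. f k \<in> C" and x: "x \<in> C" and y: "y \<in> C"
  and lx: "(\<lambda>k. hdist K (f k) x) \<longlonglongrightarrow> 0" and ly: "(\<lambda>k. hdist K (f k) y) \<longlonglongrightarrow> 0"
  shows "x = y"
proof -
  have le: "hdist K x y \<le> hdist K (f k) x + hdist K (f k) y" for k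
    using hdist_triangle[of x "f k" y] hdist_sym[of x "f k"] f x y by simp
  have "(\<lambda>k. hdist K (f k) x + hdist K (f k) y) \<longlonglongrightarrow> 0" using tendsto_add[OF lx ly] by simp
  then have "hdist K x y \<le> 0" using le by (intro tendsto_lowerbound) (auto intro: always_eventually)
  then have "hdist K x y = 0" using hdist_nonneg x y by (meson antisym)
  then show ?thesis using hdist_zero_iff x y by simp
qed

lemma lin_in: "lin_op K T \<Longrightarrow> x \<in> C \<Longrightarrow> T x \<in> C" by (simp add: lin_op_def)
lemma lin_add: "lin_op K T \<Longrightarrow> x \<in> C \<Longrightarrow> y \<in> C \<Longrightarrow> T (hadd K x y) = hadd K (T x) (T y)" by (simp add: lin_op_def)
lemma lin_scale: "lin_op K T \<Longrightarrow> x \<in> C \<Longrightarrow> T (hscale K a x) = hscale K a (T x)" by (simp add: lin_op_def)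
lemma lin_zero: "lin_op K T \<Longrightarrow> T (hzero K) = hzero K"
  using lin_scale[of T "hzero K" 0] lin_in[of T "hzero K"] by simp
lemma lin_minus: "lin_op K T \<Longrightarrow> x \<in> C \<Longrightarrow> y \<in> C \<Longrightarrow> T (hminus K x y) = hminus K (T x) (T y)"
  by (simp add: hminus_def lin_add lin_scale)

lemma iso_lin: "isometry K V \<Longrightarrow> lin_op K V" by (simp add: isometry_def)
lemma iso_in: "isometry K V \<Longrightarrow> x \<in> C \<Longrightarrow> V x \<in> C" by (simp add: isometry_def lin_op_def)
lemma iso_norm: "isometry K V \<Longrightarrow> x \<in> C \<Longrightarrow> hnorm K (V x) = hnorm K x" by (simp add: isometry_def)

lemma iso_ip: assumes V: "isometry K V" and x: "x \<in> C" and y: "y \<in> C"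
  shows "hip K (V x) (V y) = hip K x y"
proof -
  have re: "Re (hip K (V u) (V w)) = Re (hip K u w)" if u: "u \<in> C" and w: "w \<in> C" for u w
  proof -
    have "(hnorm K (V (hadd K u w)))^2 = (hnorm K (hadd K u w))^2" using iso_norm[OF V] u w by simp
    then show ?thesis using norm_sq_add[of u w] norm_sq_add[of "V u" "V w"] u w
        lin_add[OF iso_lin[OF V] u w] iso_in[OF V] iso_norm[OF V] by simp
  qed
  have "Re (hip K (V x) (V y)) = Re (hip K x y)" using re x y by simp
  moreover have "Re (hip K (V x) (V (hscale K \<i> y))) = Re (hip K x (hscale K \<i> y))" using re x y by simp
  then have "Im (hip K (V x) (V y)) = Im (hip K x y)"
    using lin_scale[OF iso_lin[OF V] y] iso_in[OF V] x y by simp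
  ultimately show ?thesis by (simp add: complex_eq_iff)
qed

end

context hs begin

lemma parallelogram: "a \<in> C \<Longrightarrow> b \<in> C \<Longrightarrow>
  (hnorm K (hminus K a b))^2 + (hnorm K (hadd K a b))^2 = 2 * (hnorm K a)^2 + 2 * (hnorm K b)^2"
  using norm_sq_add[of a b] norm_sq_minus[of a b] by simp

lemma expand_sub: assumes u: "u \<in> C" and m: "m \<in> C"
  shows "hip K (hminus K u (hscale K t m)) (hminus K u (hscale K t m))
     = hip K u u - cnj t * hip K u m - t * cnj (hip K u m) + t * cnj t * hip K m m"
  using u m ip_sym[OF u m] by (simp add: algebra_simps)

lemma proj_exists: assumes M: "closed_subspace K M" and w: "w \<in> C"
  shows "\<exists>p\<in>M. \<forall>m\<in>M. hip K (hminus K w p) m = 0"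
proof -
  have MC: "M \<subseteq> C" and M0: "hzero K \<in> M"
    and Madd: "\<And>x y. x\<in>M \<Longrightarrow> y\<in>M \<Longrightarrow> hadd K x y \<in> M"
    and Mscale: "\<And>a x. x\<in>M \<Longrightarrow> hscale K a x \<in> M"
    and Mcl: "\<And>f x. (\<forall>k. f k \<in> M) \<Longrightarrow> x \<in> C \<Longrightarrow> (\<lambda>k. hdist K (f k) x) \<longlonglongrightarrow> 0 \<Longrightarrow> x \<in> M"
    using M unfolding closed_subspace_def by blast+
  define S where "S = (\<lambda>m. (hnorm K (hminus K w m))^2) ` M"
  define d where "d = Inf S"
  have Sne: "S \<noteq> {}" using M0 S_def by auto
  have Sbdd: "bdd_below S" unfolding S_def by (rule bdd_belowI[of _ 0]) auto
  have dle: "d \<le> (hnorm K (hminus K w m))^2" if "m \<in> M" for m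
    using cInf_lower[OF _ Sbdd] that S_def d_def by auto
  have d0: "d \<ge> 0" unfolding d_def using Sne by (rule cInf_greatest) (auto simp: S_def)
  have ex: "\<exists>m\<in>M. (hnorm K (hminus K w m))^2 < d + inverse (real (Suc k))" for k
  proof -
    have "Inf S < d + inverse (real (Suc k))" using d_def by simp
    then obtain s where "s \<in> S" "s < d + inverse (real (Suc k))" using cInf_lessD[OF Sne] by blast
    then show ?thesis using S_def by auto
  qed
  then obtain f where fM: "\<And>k. f k \<in> M"
    and fd: "\<And>k. (hnorm K (hminus K w (f k)))^2 < d + inverse (real (Suc k))" by metis
  have fC: "f k \<in> C" for k using fM MC by auto
  have par: "(hdist K (f i) (f j))^2 \<le> 2 * inverse (real (Suc i)) + 2 * inverse (real (Suc j))" for i j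
  proof -
    define a where "a = hminus K w (f i)"
    define b where "b = hminus K w (f j)"
    define mid where "mid = hscale K (1/2) (hadd K (f i) (f j))"
    have midM: "mid \<in> M" unfolding mid_def using fM Madd Mscale by blast
    have midC: "mid \<in> C" using midM MC by auto
    have aC: "a \<in> C" and bC: "b \<in> C" using a_def b_def fC w by auto
    have e1: "hminus K a b = hminus K (f j) (f i)"
      unfolding a_def b_def using fC w by (intro vec_eqI) simp_all
    have e2: "hadd K a b = hscale K 2 (hminus K w mid)"
      unfolding a_def b_def mid_def using fC w by (intro vec_eqI) (simp_all add: algebra_simps)
    have n2: "(hnorm K (hadd K a b))^2 = 4 * (hnorm K (hminus K w mid))^2"
      using e2 hnorm_scale[of "hminus K w mid" 2] w midC by (simp add: power_mult_distrib)
    have dd: "hdist K (f i) (f j) = hnorm K (hminus K a b)"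
      using e1 hdist_sym[of "f i" "f j"] fC by (simp add: hdist_def)
    have "(hdist K (f i) (f j))^2 = 2 * (hnorm K a)^2 + 2 * (hnorm K b)^2 - 4 * (hnorm K (hminus K w mid))^2"
      using parallelogram[OF aC bC] dd n2 by simp
    also have "\<dots> \<le> 2 * (d + inverse (real (Suc i))) + 2 * (d + inverse (real (Suc j))) - 4 * d"
      using fd[of i] fd[of j] dle[OF midM] a_def b_def by simp
    finally show ?thesis by simp
  qed
  have cauchy: "\<forall>e>0. \<exists>N. \<forall>m\<ge>N. \<forall>k\<ge>N. hdist K (f m) (f k) < e"
  proof (intro allI impI)
    fix e :: real assume e: "e > 0"
    obtain N where N: "inverse (real (Suc N)) < e^2 / 4" using reals_Archimedean[of "e^2/4"] e by auto
    show "\<exists>N. \<forall>m\<ge>N. \<forall>k\<ge>N. hdist K (f m) (f k) < e"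
    proof (intro exI allI impI)
      fix m k assume m: "m \<ge> N" and k: "k \<ge> N"
      have "inverse (real (Suc m)) \<le> inverse (real (Suc N))" using m by (simp add: field_simps)
      moreover have "inverse (real (Suc k)) \<le> inverse (real (Suc N))" using k by (simp add: field_simps)
      ultimately have "(hdist K (f m) (f k))^2 < e^2" using par[of m k] N by linarith
      moreover have "hdist K (f m) (f k) \<ge> 0" using hdist_nonneg fC by blast
      ultimately show "hdist K (f m) (f k) < e" using e power_less_imp_less_base by fastforce
    qed
  qed
  obtain p where pC: "p \<in> C" and lim: "(\<lambda>k. hdist K (f k) p) \<longlonglongrightarrow> 0"
    using complete[of f] fC cauchy by blast
  have pM: "p \<in> M" using Mcl[OF _ pC lim] fM by blast
  have pd: "(hnorm K (hminus K w p))^2 \<le> d"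
  proof -
    have le: "hnorm K (hminus K w p) \<le> sqrt (d + inverse (real (Suc k))) + hdist K (f k) p" for k
    proof -
      have "hminus K w p = hadd K (hminus K w (f k)) (hminus K (f k) p)"
        using w pC fC by (intro vec_eqI) simp_all
      then have "hnorm K (hminus K w p) \<le> hnorm K (hminus K w (f k)) + hdist K (f k) p"
        using triangle[of "hminus K w (f k)" "hminus K (f k) p"] w pC fC by (simp add: hdist_def)
      moreover have "hnorm K (hminus K w (f k)) \<le> sqrt (d + inverse (real (Suc k)))"
        using fd[of k] real_le_rsqrt less_imp_le by blast
      ultimately show ?thesis by simp
    qed
    have "(\<lambda>k. sqrt (d + inverse (real (Suc k))) + hdist K (f k) p) \<longlonglongrightarrow> sqrt d + 0"
      by (intro tendsto_add tendsto_real_sqrt LIMSEQ_inverse_real_of_nat_add lim)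
    then have "hnorm K (hminus K w p) \<le> sqrt d" using le by (intro LIMSEQ_le_const) auto
    then show ?thesis using d0 hnorm_nonneg[of "hminus K w p"] w pC
      by (metis minus_in power_mono real_sqrt_pow2)
  qed
  have "\<forall>m\<in>M. hip K (hminus K w p) m = 0"
  proof
    fix m assume mM: "m \<in> M"
    have mC: "m \<in> C" using mM MC by auto
    define u where "u = hminus K w p"
    have uC: "u \<in> C" using u_def w pC by simp
    define c where "c = hip K u m"
    show "hip K (hminus K w p) m = 0"
    proof (cases "m = hzero K")
      case True then show ?thesis using w pC by simp
    next
      case False
      define r where "r = (hnorm K m)^2"
      have rpos: "r > 0" using False hnorm_zero_iff[OF mC] hnorm_nonneg[OF mC] r_def
        by (simp add: less_le)
      define t where "t = c / complex_of_real r"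
      have ptM: "hadd K p (hscale K t m) \<in> M" using pM mM Madd Mscale by blast
      have ev: "hminus K w (hadd K p (hscale K t m)) = hminus K u (hscale K t m)"
        unfolding u_def using w pC mC by (intro vec_eqI) simp_all
      have "hip K (hminus K u (hscale K t m)) (hminus K u (hscale K t m))
          = hip K u u - cnj t * c - t * cnj c + t * cnj t * complex_of_real r"
        using expand_sub[OF uC mC] ip_self[OF mC] c_def r_def by simp
      also have "\<dots> = hip K u u - c * cnj c / complex_of_real r"
        using rpos unfolding t_def by (simp add: field_simps)
      also have "\<dots> = complex_of_real ((hnorm K u)^2 - (cmod c)^2 / r)"
        using ip_self[OF uC] by (simp add: complex_norm_square[symmetric])
      finally have "(hnorm K (hminus K u (hscale K t m)))^2 = (hnorm K u)^2 - (cmod c)^2 / r"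
        using hnorm_sq[of "hminus K u (hscale K t m)"] uC mC by simp
      moreover have "d \<le> (hnorm K (hminus K u (hscale K t m)))^2" using dle[OF ptM] ev by simp
      ultimately have "(cmod c)^2 / r \<le> 0" using pd u_def by simp
      then have "(cmod c)^2 \<le> 0" using rpos by (simp add: divide_le_0_iff)
      then have "c = 0" by simp
      then show ?thesis using c_def u_def by simp
    qed
  qed
  then show ?thesis using pM by blast
qed

end

context hs begin

lemma adj_is: "is_adjoint K T A \<Longrightarrow> is_adjoint K T (adj K T)"
  unfolding adj_def by (rule someI[of "is_adjoint K T"])

lemma adj_unique: assumes A: "is_adjoint K T A" and B: "is_adjoint K T B" and y: "y \<in> C"
  shows "A y = B y"
proof -
  have AC: "A y \<in> C" and BC: "B y \<in> C" using A B y unfolding is_adjoint_def by auto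
  show ?thesis
  proof (rule vec_eqI2[OF AC BC])
    fix w assume w: "w \<in> C"
    show "hip K w (A y) = hip K w (B y)" using A B w y unfolding is_adjoint_def by metis
  qed
qed

lemma adj_eq: "is_adjoint K T A \<Longrightarrow> y \<in> C \<Longrightarrow> adj K T y = A y"
  using adj_unique adj_is by blast

lemma range_closed: assumes V: "isometry K V" shows "closed_subspace K (V ` C)"
proof -
  have L: "lin_op K V" using V by (rule iso_lin)
  have cl: "x \<in> V ` C" if f: "\<forall>k. f k \<in> V ` C" and x: "x \<in> C" and lim: "(\<lambda>k. hdist K (f k) x) \<longlonglongrightarrow> 0" for f x
  proof -
    obtain g where g: "\<And>k. g k \<in> C" and fg: "\<And>k. f k = V (g k)" using f unfolding image_iff Bex_def by metis
    have fC: "f k \<in> C" for k using fg g iso_in[OF V] by simp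
    have dg: "hdist K (g i) (g j) = hdist K (f i) (f j)" for i j
      using fg g iso_norm[OF V] lin_minus[OF L g g, symmetric] by (simp add: hdist_def)
    have cauchy: "\<forall>e>0. \<exists>N. \<forall>m\<ge>N. \<forall>k\<ge>N. hdist K (g m) (g k) < e"
    proof (intro allI impI)
      fix e :: real assume e: "e > 0"
      have "\<forall>\<^sub>F k in sequentially. hdist K (f k) x < e/2" using order_tendstoD(2)[OF lim, of "e/2"] e by simp
      then obtain N where N: "\<And>k. k \<ge> N \<Longrightarrow> hdist K (f k) x < e/2" by (auto simp: eventually_sequentially)
      show "\<exists>N. \<forall>m\<ge>N. \<forall>k\<ge>N. hdist K (g m) (g k) < e"
      proof (intro exI allI impI)
        fix m k assume m: "m \<ge> N" and k: "k \<ge> N"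
        have "hdist K (f m) (f k) \<le> hdist K (f m) x + hdist K x (f k)" using hdist_triangle fC x by blast
        also have "\<dots> = hdist K (f m) x + hdist K (f k) x" using hdist_sym fC x by simp
        finally show "hdist K (g m) (g k) < e" using N[OF m] N[OF k] dg by simp
      qed
    qed
    obtain y where y: "y \<in> C" and ly: "(\<lambda>k. hdist K (g k) y) \<longlonglongrightarrow> 0" using complete[of g] g cauchy by blast
    have "(\<lambda>k. hdist K (f k) (V y)) = (\<lambda>k. hdist K (g k) y)"
      using fg g y iso_norm[OF V] lin_minus[OF L g y, symmetric] by (simp add: hdist_def)
    then have "(\<lambda>k. hdist K (f k) (V y)) \<longlonglongrightarrow> 0" using ly by simp
    then have "x = V y" using lim_unique[of f x "V y"] fC x iso_in[OF V y] lim by blast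
    then show ?thesis using y by blast
  qed
  show ?thesis unfolding closed_subspace_def
  proof (intro conjI allI ballI impI)
    show "V ` C \<subseteq> C" using iso_in[OF V] by auto
    show "hzero K \<in> V ` C" using lin_zero[OF L] zero_in by (metis image_eqI)
  next
    fix x y assume "x \<in> V ` C" "y \<in> V ` C"
    then obtain a b where "a \<in> C" "b \<in> C" "x = V a" "y = V b" by blast
    then show "hadd K x y \<in> V ` C" using lin_add[OF L, of a b] by (metis add_in image_eqI)
  next
    fix a x assume "x \<in> V ` C"
    then obtain b where "b \<in> C" "x = V b" by blast
    then show "hscale K a x \<in> V ` C" using lin_scale[OF L, of b a] by (metis scale_in image_eqI)
  next
    fix f x assume "(\<forall>k. f k \<in> V ` C) \<and> x \<in> C \<and> (\<lambda>k. hdist K (f k) x) \<longlonglongrightarrow> 0"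
    then show "x \<in> V ` C" using cl by blast
  qed
qed

lemma iso_adjoint: assumes V: "isometry K V" shows "is_adjoint K V (adj K V)"
proof -
  have ex: "\<exists>x. x \<in> C \<and> (\<forall>u\<in>C. hip K (V u) y = hip K u x)" if y: "y \<in> C" for y
  proof -
    obtain p where pR: "p \<in> V ` C" and orth: "\<forall>m\<in>V ` C. hip K (hminus K y p) m = 0"
      using proj_exists[OF range_closed[OF V] y] by blast
    obtain x where x: "x \<in> C" and px: "p = V x" using pR by blast
    have "hip K (V u) y = hip K u x" if u: "u \<in> C" for u
    proof -
      have pC: "p \<in> C" using px x iso_in[OF V] by simp
      have "hip K (hminus K y p) (V u) = 0" using orth u by blast
      then have "hip K (V u) (hminus K y p) = 0" using ip_sym[of "hminus K y p" "V u"] y pC iso_in[OF V u] by simp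
      then have "hip K (V u) y = hip K (V u) p" using y pC iso_in[OF V u] by simp
      then show ?thesis using px iso_ip[OF V u x] by simp
    qed
    then show ?thesis using x by blast
  qed
  define A where "A = (\<lambda>y. SOME x. x \<in> C \<and> (\<forall>u\<in>C. hip K (V u) y = hip K u x))"
  have "is_adjoint K V A" unfolding is_adjoint_def
  proof (intro conjI ballI)
    fix y assume "y \<in> C"
    then show "A y \<in> C" unfolding A_def using someI_ex[OF ex] by blast
  next
    fix x y assume x: "x \<in> C" and y: "y \<in> C"
    show "hip K (V x) y = hip K x (A y)" unfolding A_def using someI_ex[OF ex[OF y]] x by blast
  qed
  then show ?thesis by (rule adj_is)
qed

lemma adjD_in: "is_adjoint K T A \<Longrightarrow> y \<in> C \<Longrightarrow> A y \<in> C" by (simp add: is_adjoint_def)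
lemma adjD_ip: "is_adjoint K T A \<Longrightarrow> x \<in> C \<Longrightarrow> y \<in> C \<Longrightarrow> hip K (T x) y = hip K x (A y)" by (simp add: is_adjoint_def)

lemma adj_add: assumes A: "is_adjoint K T A" and T: "\<And>x. x \<in> C \<Longrightarrow> T x \<in> C"
  and x: "x \<in> C" and y: "y \<in> C" shows "A (hadd K x y) = hadd K (A x) (A y)"
  by (rule vec_eqI2) (use A T x y in \<open>simp_all add: adjD_in adjD_ip[symmetric]\<close>)

lemma adj_scale: assumes A: "is_adjoint K T A" and T: "\<And>x. x \<in> C \<Longrightarrow> T x \<in> C"
  and x: "x \<in> C" shows "A (hscale K a x) = hscale K a (A x)"
  by (rule vec_eqI2) (use A T x in \<open>simp_all add: adjD_in adjD_ip[symmetric]\<close>)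

lemma adj_zero: assumes A: "is_adjoint K T A" and T: "\<And>x. x \<in> C \<Longrightarrow> T x \<in> C"
  shows "A (hzero K) = hzero K"
  using adj_scale[OF A T zero_in, of 0] adjD_in[OF A zero_in] by simp

lemma adj_minus: assumes A: "is_adjoint K T A" and T: "\<And>x. x \<in> C \<Longrightarrow> T x \<in> C"
  and x: "x \<in> C" and y: "y \<in> C" shows "A (hminus K x y) = hminus K (A x) (A y)"
  using adj_add[OF A T x] adj_scale[OF A T y] y by (simp add: hminus_def)

lemma iso_adj_left: assumes V: "isometry K V" and A: "is_adjoint K V A" and x: "x \<in> C"
  shows "A (V x) = x"
  by (rule vec_eqI2) (use A V x in \<open>simp_all add: adjD_in adjD_ip[symmetric] iso_in iso_ip\<close>)

lemma adj_contr: assumes V: "isometry K V" and A: "is_adjoint K V A" and y: "y \<in> C"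
  shows "hnorm K (A y) \<le> hnorm K y"
proof -
  have Ay: "A y \<in> C" using A y by (rule adjD_in)
  have "(hnorm K (A y))^2 = Re (hip K (V (A y)) y)" using hnorm_sq[OF Ay] adjD_ip[OF A Ay y] by simp
  also have "\<dots> \<le> cmod (hip K (V (A y)) y)" by (rule complex_Re_le_cmod)
  also have "\<dots> \<le> hnorm K (V (A y)) * hnorm K y" using cauchy_schwarz iso_in[OF V Ay] y by blast
  also have "\<dots> = hnorm K (A y) * hnorm K y" using iso_norm[OF V Ay] by simp
  finally have "(hnorm K (A y))^2 \<le> hnorm K (A y) * hnorm K y" .
  then show ?thesis using hnorm_nonneg[OF Ay] hnorm_nonneg[OF y]
    by (cases "hnorm K (A y) = 0") (auto simp: power2_eq_square)
qed

lemma unitary_right: assumes U: "unitary K V" and A: "is_adjoint K V A" and y: "y \<in> C"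
  shows "V (A y) = y"
proof -
  have V: "isometry K V" using U by (simp add: unitary_def)
  obtain x where x: "x \<in> C" and yx: "y = V x" using U y unfolding unitary_def by blast
  show ?thesis using iso_adj_left[OF V A x] yx by simp
qed

end


definition l2sp :: "'b cspace \<Rightarrow> (nat \<Rightarrow> 'b) cspace" where
  "l2sp K = \<lparr>hcarrier = {f. (\<forall>k. f k \<in> hcarrier K) \<and> summable (\<lambda>k. (hnorm K (f k))^2)},
     hadd = (\<lambda>f g k. hadd K (f k) (g k)), hscale = (\<lambda>a f k. hscale K a (f k)),
     hzero = (\<lambda>k. hzero K), hip = (\<lambda>f g. \<Sum>k. hip K (f k) (g k))\<rparr>"

lemma l2_simps[simp]: "hcarrier (l2sp K) = {f. (\<forall>k. f k \<in> hcarrier K) \<and> summable (\<lambda>k. (hnorm K (f k))^2)}"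
  "hadd (l2sp K) f g = (\<lambda>k. hadd K (f k) (g k))" "hscale (l2sp K) a f = (\<lambda>k. hscale K a (f k))"
  "hzero (l2sp K) = (\<lambda>k. hzero K)" "hip (l2sp K) f g = (\<Sum>k. hip K (f k) (g k))"
  by (simp_all add: l2sp_def)

lemma l2_minus[simp]: "hminus (l2sp K) f g = (\<lambda>k. hminus K (f k) (g k))"
  by (simp add: hminus_def)

context hs begin

lemma scale_one[simp]: "x \<in> C \<Longrightarrow> hscale K 1 x = x" by (rule vec_eqI) simp_all
lemma scale_scale[simp]: "x \<in> C \<Longrightarrow> hscale K a (hscale K b x) = hscale K (a * b) x" by (rule vec_eqI) simp_all
lemma add_scale_distrib: "x \<in> C \<Longrightarrow> hscale K (a + b) x = hadd K (hscale K a x) (hscale K b x)"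
  by (rule vec_eqI) (simp_all add: algebra_simps)
lemma scale_add_distrib: "x \<in> C \<Longrightarrow> y \<in> C \<Longrightarrow> hscale K a (hadd K x y) = hadd K (hscale K a x) (hscale K a y)"
  by (rule vec_eqI) (simp_all add: algebra_simps)

lemma sq_add_le: "x \<in> C \<Longrightarrow> y \<in> C \<Longrightarrow> (hnorm K (hadd K x y))^2 \<le> 2 * (hnorm K x)^2 + 2 * (hnorm K y)^2"
  using parallelogram[of x y] zero_le_power2[of "hnorm K (hminus K x y)"] by linarith
lemma sq_minus_le: "x \<in> C \<Longrightarrow> y \<in> C \<Longrightarrow> (hnorm K (hminus K x y))^2 \<le> 2 * (hnorm K x)^2 + 2 * (hnorm K y)^2"
  using parallelogram[of x y] zero_le_power2[of "hnorm K (hadd K x y)"] by linarith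

lemma ip_le_sq: "x \<in> C \<Longrightarrow> y \<in> C \<Longrightarrow> cmod (hip K x y) \<le> (hnorm K x)^2 + (hnorm K y)^2"
proof -
  assume x: "x \<in> C" and y: "y \<in> C"
  have "cmod (hip K x y) \<le> hnorm K x * hnorm K y" using cauchy_schwarz x y by blast
  also have "\<dots> \<le> (hnorm K x)^2 + (hnorm K y)^2"
  proof -
    have "0 \<le> (hnorm K x - hnorm K y)^2" by simp
    moreover have "0 \<le> hnorm K x * hnorm K y" using hnorm_nonneg[OF x] hnorm_nonneg[OF y] by simp
    ultimately show ?thesis by (simp add: power2_diff)
  qed
  finally show ?thesis .
qed

abbreviation "L \<equiv> l2sp K"

lemma l2_ip_summable: assumes f: "f \<in> hcarrier L" and g: "g \<in> hcarrier L"
  shows "summable (\<lambda>k. hip K (f k) (g k))"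
proof -
  have "summable (\<lambda>k. (hnorm K (f k))^2 + (hnorm K (g k))^2)" using f g by (simp add: summable_add)
  then have "summable (\<lambda>k. cmod (hip K (f k) (g k)))"
    by (rule summable_comparison_test') (use f g ip_le_sq in auto)
  then show ?thesis by (rule summable_norm_cancel)
qed

lemma l2_ip_self: assumes f: "f \<in> hcarrier L"
  shows "hip L f f = complex_of_real (\<Sum>k. (hnorm K (f k))^2)"
proof -
  have s: "summable (\<lambda>k. (hnorm K (f k))^2)" using f by simp
  have "hip L f f = (\<Sum>k. complex_of_real ((hnorm K (f k))^2))" using f ip_self by simp
  also have "\<dots> = complex_of_real (\<Sum>k. (hnorm K (f k))^2)"
  proof -
    have "(\<lambda>k. complex_of_real ((hnorm K (f k))^2)) sums complex_of_real (\<Sum>k. (hnorm K (f k))^2)"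
      by (rule sums_of_real) (rule summable_sums[OF s])
    then show ?thesis by (rule sums_unique[symmetric])
  qed
  finally show ?thesis .
qed

lemma l2_norm: "f \<in> hcarrier L \<Longrightarrow> hnorm L f = sqrt (\<Sum>k. (hnorm K (f k))^2)"
  by (simp add: hnorm_def l2_ip_self del: l2_simps(5))

lemma l2_norm_sq: "f \<in> hcarrier L \<Longrightarrow> (hnorm L f)^2 = (\<Sum>k. (hnorm K (f k))^2)"
  using l2_norm[of f] suminf_nonneg[of "\<lambda>k. (hnorm K (f k))^2"] by simp

lemma l2_comp_le: assumes f: "f \<in> hcarrier L" shows "(hnorm K (f k))^2 \<le> (hnorm L f)^2"
proof -
  have "sum (\<lambda>k. (hnorm K (f k))^2) {k} \<le> (\<Sum>k. (hnorm K (f k))^2)"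
    using f by (intro sum_le_suminf) auto
  then show ?thesis using l2_norm_sq[OF f] by simp
qed

lemma l2_add_in: assumes f: "f \<in> hcarrier L" and g: "g \<in> hcarrier L"
  shows "(\<lambda>k. hadd K (f k) (g k)) \<in> hcarrier L"
proof -
  have "summable (\<lambda>k. 2 * (hnorm K (f k))^2 + 2 * (hnorm K (g k))^2)" using f g
    by (simp add: summable_add summable_mult)
  then have "summable (\<lambda>k. (hnorm K (hadd K (f k) (g k)))^2)"
    by (rule summable_comparison_test') (use f g sq_add_le in auto)
  then show ?thesis using f g by simp
qed

lemma l2_scale_in: assumes f: "f \<in> hcarrier L" shows "(\<lambda>k. hscale K a (f k)) \<in> hcarrier L"
proof -
  have "summable (\<lambda>k. (cmod a)^2 * (hnorm K (f k))^2)" using f by (simp add: summable_mult)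
  then show ?thesis using f hnorm_scale by (simp add: power_mult_distrib)
qed

lemma l2_minus_in: "f \<in> hcarrier L \<Longrightarrow> g \<in> hcarrier L \<Longrightarrow> (\<lambda>k. hminus K (f k) (g k)) \<in> hcarrier L"
  using l2_add_in[of f "\<lambda>k. hscale K (-1) (g k)"] l2_scale_in[of g "-1"] by (simp add: hminus_def)

lemma l2_dist: "f \<in> hcarrier L \<Longrightarrow> g \<in> hcarrier L \<Longrightarrow>
   hdist L f g = sqrt (\<Sum>k. (hnorm K (hminus K (f k) (g k)))^2)"
  using l2_norm[of "\<lambda>k. hminus K (f k) (g k)"] l2_minus_in by (simp add: hdist_def del: l2_simps(5))

end


context hs begin

lemma norm_lim: assumes a: "a \<in> C" and b: "\<And>j. b j \<in> C" and c: "c \<in> C"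
  and lim: "(\<lambda>j. hdist K (b j) c) \<longlonglongrightarrow> 0"
  shows "(\<lambda>j. hnorm K (hminus K a (b j))) \<longlonglongrightarrow> hnorm K (hminus K a c)"
proof -
  have le: "\<bar>hnorm K (hminus K a (b j)) - hnorm K (hminus K a c)\<bar> \<le> hdist K (b j) c" for j
  proof -
    have "hminus K (hminus K a (b j)) (hminus K a c) = hminus K c (b j)"
      using a b c by (intro vec_eqI) simp_all
    then have "hdist K (hminus K a (b j)) (hminus K a c) = hdist K (b j) c"
      using hdist_sym[of c "b j"] b c by (simp add: hdist_def)
    then show ?thesis using norm_diff_le[of "hminus K a (b j)" "hminus K a c"] a b c by simp
  qed
  have l1: "(\<lambda>j. hnorm K (hminus K a c) - hdist K (b j) c) \<longlonglongrightarrow> hnorm K (hminus K a c)"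
    using tendsto_diff[OF tendsto_const lim] by simp
  have l2: "(\<lambda>j. hnorm K (hminus K a c) + hdist K (b j) c) \<longlonglongrightarrow> hnorm K (hminus K a c)"
    using tendsto_add[OF tendsto_const lim] by simp
  have le1: "hnorm K (hminus K a c) - hdist K (b j) c \<le> hnorm K (hminus K a (b j))" for j
    using le[of j] unfolding abs_le_iff by linarith
  have le2: "hnorm K (hminus K a (b j)) \<le> hnorm K (hminus K a c) + hdist K (b j) c" for j
    using le[of j] unfolding abs_le_iff by linarith
  show ?thesis
    by (rule tendsto_sandwich[OF _ _ l1 l2]) (use le1 le2 in \<open>auto intro!: always_eventually\<close>)
qed

lemma l2_dist_nonneg: assumes f: "f \<in> hcarrier L" and g: "g \<in> hcarrier L" shows "hdist L f g \<ge> 0"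
proof -
  have m: "(\<lambda>k. hminus K (f k) (g k)) \<in> hcarrier L" using l2_minus_in f g by blast
  then have "0 \<le> (\<Sum>k. (hnorm K (hminus K (f k) (g k)))^2)"
    by (intro suminf_nonneg) auto
  then show ?thesis using l2_dist[OF f g] by simp
qed

lemma comp_dist_le: assumes f: "f \<in> hcarrier L" and g: "g \<in> hcarrier L"
  shows "hdist K (f k) (g k) \<le> hdist L f g"
proof -
  have m: "(\<lambda>k. hminus K (f k) (g k)) \<in> hcarrier L" using l2_minus_in f g by blast
  have "(hdist K (f k) (g k))^2 \<le> (hdist L f g)^2"
    using l2_comp_le[OF m, of k] by (simp add: hdist_def del: l2_simps(5))
  moreover have "hdist L f g \<ge> 0" using f g by (rule l2_dist_nonneg)
  ultimately show ?thesis using power2_le_imp_le by blast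
qed

lemma l2_complete: assumes FL: "\<And>m. F m \<in> hcarrier L"
  and cau: "\<forall>e>0. \<exists>N. \<forall>m\<ge>N. \<forall>j\<ge>N. hdist L (F m) (F j) < e"
  shows "\<exists>g\<in>hcarrier L. (\<lambda>m. hdist L (F m) g) \<longlonglongrightarrow> 0"
proof -
  have FC: "F m k \<in> C" for m k using FL by simp
  have "\<exists>y\<in>C. (\<lambda>m. hdist K (F m k) y) \<longlonglongrightarrow> 0" for k
  proof (rule complete)
    show "\<forall>m. F m k \<in> C" using FC by simp
    show "\<forall>e>0. \<exists>N. \<forall>m\<ge>N. \<forall>j\<ge>N. hdist K (F m k) (F j k) < e"
      using cau comp_dist_le[OF FL FL] by (meson le_less_trans)
  qed
  then obtain g where gC: "\<And>k. g k \<in> C" and glim: "\<And>k. (\<lambda>m. hdist K (F m k) (g k)) \<longlonglongrightarrow> 0" by metis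
  have main: "(\<lambda>k. hminus K (F m k) (g k)) \<in> hcarrier L \<and>
       (\<Sum>k. (hnorm K (hminus K (F m k) (g k)))^2) \<le> e^2"
    if e: "e > 0" and N: "\<forall>m\<ge>N. \<forall>j\<ge>N. hdist L (F m) (F j) < e" and m: "m \<ge> N" for e N m
  proof -
    have ps: "(\<Sum>k<P. (hnorm K (hminus K (F m k) (g k)))^2) \<le> e^2" for P
    proof -
      have lim: "(\<lambda>j. \<Sum>k<P. (hnorm K (hminus K (F m k) (F j k)))^2) \<longlonglongrightarrow>
                 (\<Sum>k<P. (hnorm K (hminus K (F m k) (g k)))^2)"
        by (intro tendsto_sum tendsto_power norm_lim FC gC glim)
      have "(\<Sum>k<P. (hnorm K (hminus K (F m k) (F j k)))^2) \<le> e^2" if j: "j \<ge> N" for j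
      proof -
        have mi: "(\<lambda>k. hminus K (F m k) (F j k)) \<in> hcarrier L" using l2_minus_in FL by blast
        have "(\<Sum>k<P. (hnorm K (hminus K (F m k) (F j k)))^2) \<le> (\<Sum>k. (hnorm K (hminus K (F m k) (F j k)))^2)"
          using mi by (intro sum_le_suminf) auto
        also have "\<dots> = (hdist L (F m) (F j))^2"
          using l2_norm_sq[OF mi] by (simp add: hdist_def del: l2_simps(5))
        also have "\<dots> \<le> e^2"
        proof -
          have "hdist L (F m) (F j) \<ge> 0" using FL[of m] FL[of j] by (rule l2_dist_nonneg)
          then show ?thesis using N m j by (simp add: power_mono less_imp_le)
        qed
        finally show ?thesis .
      qed
      then show ?thesis using LIMSEQ_le_const2[OF lim] by blast
    qed
    have sm: "summable (\<lambda>k. (hnorm K (hminus K (F m k) (g k)))^2)"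
      by (rule summableI_nonneg_bounded[OF _ ps]) simp
    then show ?thesis using FC gC ps by (simp add: suminf_le_const)
  qed
  obtain N0 where N0: "\<forall>m\<ge>N0. \<forall>j\<ge>N0. hdist L (F m) (F j) < 1" using cau by (meson zero_less_one)
  have dL: "(\<lambda>k. hminus K (F N0 k) (g k)) \<in> hcarrier L" using main[OF _ N0] by simp
  have gL: "g \<in> hcarrier L"
  proof -
    have "g = (\<lambda>k. hminus K (F N0 k) (hminus K (F N0 k) (g k)))"
      using FC gC by (intro ext vec_eqI) simp_all
    moreover have "(\<lambda>k. hminus K (F N0 k) (hminus K (F N0 k) (g k))) \<in> hcarrier L"
      using l2_minus_in[OF FL dL] .
    ultimately show ?thesis by simp
  qed
  have "(\<lambda>m. hdist L (F m) g) \<longlonglongrightarrow> 0"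
  proof (rule LIMSEQ_I)
    fix r :: real assume r: "r > 0"
    obtain N where N: "\<forall>m\<ge>N. \<forall>j\<ge>N. hdist L (F m) (F j) < r/2" using cau r by (meson half_gt_zero)
    show "\<exists>no. \<forall>m\<ge>no. norm (hdist L (F m) g - 0) < r"
    proof (intro exI allI impI)
      fix m assume m: "m \<ge> N"
      have s: "(\<Sum>k. (hnorm K (hminus K (F m k) (g k)))^2) \<le> (r/2)^2" using main[OF _ N m] r by simp
      have "hdist L (F m) g = sqrt (\<Sum>k. (hnorm K (hminus K (F m k) (g k)))^2)" using l2_dist FL gL by blast
      also have "\<dots> \<le> sqrt ((r/2)^2)" using s by (rule real_sqrt_le_mono)
      also have "\<dots> = r/2" using r by simp
      finally have "hdist L (F m) g \<le> r/2" .
      moreover have "hdist L (F m) g \<ge> 0" using FL gL by (rule l2_dist_nonneg)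
      ultimately show "norm (hdist L (F m) g - 0) < r" using r by simp
    qed
  qed
  then show ?thesis using gL by blast
qed

end

context hs begin
lemma l2_assoc: "x \<in> hcarrier L \<Longrightarrow> y \<in> hcarrier L \<Longrightarrow> z \<in> hcarrier L \<Longrightarrow>
    hadd L (hadd L x y) z = hadd L x (hadd L y z)"
  by (simp add: fun_eq_iff add_assoc)
lemma l2_comm: "x \<in> hcarrier L \<Longrightarrow> y \<in> hcarrier L \<Longrightarrow> hadd L x y = hadd L y x"
  by (simp add: fun_eq_iff add_comm)
lemma l2_add_zero: "x \<in> hcarrier L \<Longrightarrow> hadd L x (hzero L) = x"
  by (simp add: fun_eq_iff add_zero)
lemma l2_add_neg: "x \<in> hcarrier L \<Longrightarrow> hadd L x (hscale L (-1) x) = hzero L"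
  by (simp add: fun_eq_iff add_neg)
lemma l2_scale_one: "x \<in> hcarrier L \<Longrightarrow> hscale L 1 x = x"
  by (simp add: fun_eq_iff scale_one)
lemma l2_scale_scale: "x \<in> hcarrier L \<Longrightarrow> hscale L a (hscale L b x) = hscale L (a * b) x"
  by (simp add: fun_eq_iff scale_scale)
lemma l2_add_scale: "x \<in> hcarrier L \<Longrightarrow> hscale L (a + b) x = hadd L (hscale L a x) (hscale L b x)"
  by (simp add: fun_eq_iff add_scale_distrib)
lemma l2_scale_add: "x \<in> hcarrier L \<Longrightarrow> y \<in> hcarrier L \<Longrightarrow>
    hscale L a (hadd L x y) = hadd L (hscale L a x) (hscale L a y)"
  by (simp add: fun_eq_iff scale_add_distrib)

lemma l2_ip_add: assumes x: "x \<in> hcarrier L" and y: "y \<in> hcarrier L" and z: "z \<in> hcarrier L"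
  shows "hip L (hadd L x y) z = hip L x z + hip L y z"
proof -
  have xk: "\<And>k. x k \<in> C" and yk: "\<And>k. y k \<in> C" and zk: "\<And>k. z k \<in> C" using x y z by auto
  have "hip L (hadd L x y) z = (\<Sum>k. hip K (x k) (z k) + hip K (y k) (z k))"
    by (simp only: l2_simps ip_add_left xk yk zk)
  also have "\<dots> = hip L x z + hip L y z"
    using suminf_add[OF l2_ip_summable[OF x z] l2_ip_summable[OF y z]] by (simp only: l2_simps)
  finally show ?thesis .
qed

lemma l2_ip_scale: assumes x: "x \<in> hcarrier L" and y: "y \<in> hcarrier L"
  shows "hip L (hscale L a x) y = a * hip L x y"
proof -
  have xk: "\<And>k. x k \<in> C" and yk: "\<And>k. y k \<in> C" using x y by auto
  have "hip L (hscale L a x) y = (\<Sum>k. a * hip K (x k) (y k))"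
    by (simp only: l2_simps ip_scale_left xk yk)
  also have "\<dots> = a * hip L x y" using suminf_mult[OF l2_ip_summable[OF x y]] by (simp only: l2_simps)
  finally show ?thesis .
qed

lemma l2_ip_sym: assumes x: "x \<in> hcarrier L" and y: "y \<in> hcarrier L"
  shows "hip L y x = cnj (hip L x y)"
proof -
  have xk: "\<And>k. x k \<in> C" and yk: "\<And>k. y k \<in> C" using x y by auto
  have "hip L y x = (\<Sum>k. cnj (hip K (x k) (y k)))"
    by (simp only: l2_simps ip_cnj xk yk)
  also have "\<dots> = cnj (hip L x y)"
  proof -
    have "(\<lambda>k. cnj (hip K (x k) (y k))) sums cnj (\<Sum>k. hip K (x k) (y k))"
      by (subst sums_cnj) (rule summable_sums[OF l2_ip_summable[OF x y]])
    then show ?thesis unfolding l2_simps by (rule sums_unique[symmetric])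
  qed
  finally show ?thesis .
qed
lemma l2_ip_pos: assumes x: "x \<in> hcarrier L" shows "Im (hip L x x) = 0 \<and> 0 \<le> Re (hip L x x)"
proof -
  have "0 \<le> (\<Sum>k. (hnorm K (x k))^2)" using x by (intro suminf_nonneg) auto
  then show ?thesis unfolding l2_ip_self[OF x] by simp
qed

lemma l2_ip_def0: assumes x: "x \<in> hcarrier L" and h: "hip L x x = 0" shows "x = hzero L"
proof -
  have "(\<Sum>k. (hnorm K (x k))^2) = 0" using l2_ip_self[OF x] h by simp
  then have "\<forall>k. (hnorm K (x k))^2 = 0" using x by (subst (asm) suminf_eq_zero_iff) auto
  then have "\<forall>k. x k = hzero K" using x hnorm_zero_iff by simp
  then show ?thesis by (simp add: fun_eq_iff)
qed


lemma l2_add_in': "x \<in> hcarrier L \<Longrightarrow> y \<in> hcarrier L \<Longrightarrow> hadd L x y \<in> hcarrier L"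
  using l2_add_in by (simp only: l2_simps(2))
lemma l2_scale_in': "x \<in> hcarrier L \<Longrightarrow> hscale L a x \<in> hcarrier L"
  using l2_scale_in by (simp only: l2_simps(3))
lemma l2_zero_in': "hzero L \<in> hcarrier L" by simp

lemma l2_chilbert: "chilbert L"
  unfolding chilbert_def Let_def
proof (intro conjI)
  show "\<forall>f. (\<forall>k. f k \<in> hcarrier L) \<and> (\<forall>e>0. \<exists>N. \<forall>m\<ge>N. \<forall>k\<ge>N. hdist L (f m) (f k) < e) \<longrightarrow>
           (\<exists>x\<in>hcarrier L. (\<lambda>k. hdist L (f k) x) \<longlonglongrightarrow> 0)"
    using l2_complete by blast
  show "hzero L \<in> hcarrier L" by (rule l2_zero_in')
  show "\<forall>x\<in>hcarrier L. \<forall>y\<in>hcarrier L. hadd L x y \<in> hcarrier L" using l2_add_in' by blast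
  show "\<forall>a. \<forall>x\<in>hcarrier L. hscale L a x \<in> hcarrier L" using l2_scale_in' by blast
  show "\<forall>x\<in>hcarrier L. \<forall>y\<in>hcarrier L. \<forall>z\<in>hcarrier L. hadd L (hadd L x y) z = hadd L x (hadd L y z)"
    using l2_assoc by blast
  show "\<forall>x\<in>hcarrier L. \<forall>y\<in>hcarrier L. hadd L x y = hadd L y x" using l2_comm by blast
  show "\<forall>x\<in>hcarrier L. hadd L x (hzero L) = x" using l2_add_zero by blast
  show "\<forall>x\<in>hcarrier L. hadd L x (hscale L (- 1) x) = hzero L" using l2_add_neg by blast
  show "\<forall>x\<in>hcarrier L. hscale L 1 x = x" using l2_scale_one by blast
  show "\<forall>a b. \<forall>x\<in>hcarrier L. hscale L a (hscale L b x) = hscale L (a * b) x" using l2_scale_scale by blast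
  show "\<forall>a b. \<forall>x\<in>hcarrier L. hscale L (a + b) x = hadd L (hscale L a x) (hscale L b x)"
    using l2_add_scale by blast
  show "\<forall>a. \<forall>x\<in>hcarrier L. \<forall>y\<in>hcarrier L. hscale L a (hadd L x y) = hadd L (hscale L a x) (hscale L a y)"
    using l2_scale_add by blast
  show "\<forall>x\<in>hcarrier L. \<forall>y\<in>hcarrier L. \<forall>z\<in>hcarrier L. hip L (hadd L x y) z = hip L x z + hip L y z"
    using l2_ip_add by blast
  show "\<forall>a. \<forall>x\<in>hcarrier L. \<forall>y\<in>hcarrier L. hip L (hscale L a x) y = a * hip L x y" using l2_ip_scale by blast
  show "\<forall>x\<in>hcarrier L. \<forall>y\<in>hcarrier L. hip L y x = cnj (hip L x y)" using l2_ip_sym by blast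
  show "\<forall>x\<in>hcarrier L. Im (hip L x x) = 0 \<and> 0 \<le> Re (hip L x x)" using l2_ip_pos by blast
  show "\<forall>x\<in>hcarrier L. hip L x x = 0 \<longrightarrow> x = hzero L" using l2_ip_def0 by blast
qed

end

definition subsp :: "'b cspace \<Rightarrow> 'b set \<Rightarrow> 'b cspace" where
  "subsp K M = K\<lparr>hcarrier := M\<rparr>"

lemma subsp_simps[simp]: "hcarrier (subsp K M) = M" "hadd (subsp K M) = hadd K" "hscale (subsp K M) = hscale K"
  "hzero (subsp K M) = hzero K" "hip (subsp K M) = hip K"
  by (simp_all add: subsp_def)

lemma subsp_norm[simp]: "hnorm (subsp K M) = hnorm K" by (simp add: hnorm_def[abs_def])
lemma subsp_minus[simp]: "hminus (subsp K M) = hminus K" by (simp add: hminus_def[abs_def])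
lemma subsp_dist[simp]: "hdist (subsp K M) = hdist K" by (simp add: hdist_def[abs_def])

lemma subsp_chilbert: assumes ch: "chilbert K" and M: "closed_subspace K M" shows "chilbert (subsp K M)"
proof -
  interpret hs K by (rule hs.intro[OF ch])
  have MC: "M \<subseteq> C" and M0: "hzero K \<in> M"
    and Madd: "\<And>x y. x\<in>M \<Longrightarrow> y\<in>M \<Longrightarrow> hadd K x y \<in> M"
    and Mscale: "\<And>a x. x\<in>M \<Longrightarrow> hscale K a x \<in> M"
    and Mcl: "\<And>f x. (\<forall>k. f k \<in> M) \<Longrightarrow> x \<in> C \<Longrightarrow> (\<lambda>k. hdist K (f k) x) \<longlonglongrightarrow> 0 \<Longrightarrow> x \<in> M"
    using M unfolding closed_subspace_def by blast+
  show ?thesis unfolding chilbert_def Let_def subsp_simps subsp_dist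
  proof (intro conjI ballI allI impI)
    fix f :: "nat \<Rightarrow> _" assume "(\<forall>k. f k \<in> M) \<and> (\<forall>e>0. \<exists>N. \<forall>m\<ge>N. \<forall>k\<ge>N. hdist K (f m) (f k) < e)"
    then show "\<exists>x\<in>M. (\<lambda>k. hdist K (f k) x) \<longlonglongrightarrow> 0" using complete[of f] MC Mcl by blast
  next
    fix x y assume "x \<in> M" "y \<in> M" then show "hip K y x = cnj (hip K x y)" using MC ip_sym by blast
  next
    fix x assume "x \<in> M" then show "Im (hip K x x) = 0" using MC ip_Im by blast
  next
    fix x assume "x \<in> M" then show "0 \<le> Re (hip K x x)" using MC ip_Re by blast
  next
    fix x assume "x \<in> M" "hip K x x = 0" then show "x = hzero K" using MC ip_def0 by blast
  next
    fix x y z assume "x \<in> M" "y \<in> M" "z \<in> M" then show "hadd K (hadd K x y) z = hadd K x (hadd K y z)"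
      using MC add_assoc by blast
  next
    fix x y assume "x \<in> M" "y \<in> M" then show "hadd K x y = hadd K y x" using MC add_comm by blast
  next
    fix x assume "x \<in> M" then show "hadd K x (hscale K (- 1) x) = hzero K" using MC add_neg by blast
  next
    fix a b x assume "x \<in> M" then show "hscale K (a + b) x = hadd K (hscale K a x) (hscale K b x)"
      using MC add_scale_distrib by blast
  next
    fix a x y assume "x \<in> M" "y \<in> M" then show "hscale K a (hadd K x y) = hadd K (hscale K a x) (hscale K a y)"
      using MC scale_add_distrib by blast
  next
    fix x y z assume "x \<in> M" "y \<in> M" "z \<in> M" then show "hip K (hadd K x y) z = hip K x z + hip K y z"
      using MC ip_add_left by blast
  next
    fix a x y assume "x \<in> M" "y \<in> M" then show "hip K (hscale K a x) y = a * hip K x y"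
      using MC ip_scale_left by blast
  qed (use MC M0 Madd Mscale in \<open>auto\<close>)
qed


locale step = hs K for K :: "'b cspace" +
  fixes z :: "nat \<Rightarrow> nat \<Rightarrow> complex" and n p :: nat and V :: "nat \<Rightarrow> 'b \<Rightarrow> 'b"
  assumes zc: "\<forall>i\<in>{1..n}. \<forall>j\<in>{1..n}. i \<noteq> j \<longrightarrow> cmod (z i j) = 1 \<and> z j i = cnj (z i j)"
    and dnc: "dnc_isometries K z n V"
    and p: "p \<in> {1..n}"
begin

abbreviation "A i \<equiv> adj K (V i)"

lemma isoV: "i \<in> {1..n} \<Longrightarrow> isometry K (V i)" using dnc by (simp add: dnc_isometries_def)
lemma adjV: "i \<in> {1..n} \<Longrightarrow> is_adjoint K (V i) (A i)" using isoV iso_adjoint by blast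
lemma VC[simp]: "i \<in> {1..n} \<Longrightarrow> x \<in> C \<Longrightarrow> V i x \<in> C" using isoV iso_in by blast
lemma AC[simp]: "i \<in> {1..n} \<Longrightarrow> x \<in> C \<Longrightarrow> A i x \<in> C" using adjV adjD_in by blast
lemma linV: "i \<in> {1..n} \<Longrightarrow> lin_op K (V i)" using isoV iso_lin by blast
lemma V_add[simp]: "i \<in> {1..n} \<Longrightarrow> x \<in> C \<Longrightarrow> y \<in> C \<Longrightarrow> V i (hadd K x y) = hadd K (V i x) (V i y)"
  using linV lin_add by blast
lemma V_scale[simp]: "i \<in> {1..n} \<Longrightarrow> x \<in> C \<Longrightarrow> V i (hscale K a x) = hscale K a (V i x)"
  using linV lin_scale by blast
lemma V_zero[simp]: "i \<in> {1..n} \<Longrightarrow> V i (hzero K) = hzero K"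
  using linV lin_zero by blast
lemma V_minus[simp]: "i \<in> {1..n} \<Longrightarrow> x \<in> C \<Longrightarrow> y \<in> C \<Longrightarrow> V i (hminus K x y) = hminus K (V i x) (V i y)"
  using linV lin_minus by blast
lemma A_add[simp]: "i \<in> {1..n} \<Longrightarrow> x \<in> C \<Longrightarrow> y \<in> C \<Longrightarrow> A i (hadd K x y) = hadd K (A i x) (A i y)"
  using adj_add[OF adjV] VC by blast
lemma A_scale[simp]: "i \<in> {1..n} \<Longrightarrow> x \<in> C \<Longrightarrow> A i (hscale K a x) = hscale K a (A i x)"
  using adj_scale[OF adjV] VC by blast
lemma A_zero[simp]: "i \<in> {1..n} \<Longrightarrow> A i (hzero K) = hzero K"
  using adj_zero[OF adjV] VC by blast
lemma A_minus[simp]: "i \<in> {1..n} \<Longrightarrow> x \<in> C \<Longrightarrow> y \<in> C \<Longrightarrow> A i (hminus K x y) = hminus K (A i x) (A i y)"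
  using adj_minus[OF adjV] VC by blast
lemma AV[simp]: "i \<in> {1..n} \<Longrightarrow> x \<in> C \<Longrightarrow> A i (V i x) = x"
  using iso_adj_left[OF isoV adjV] by blast
lemma ipA: "i \<in> {1..n} \<Longrightarrow> x \<in> C \<Longrightarrow> y \<in> C \<Longrightarrow> hip K (V i x) y = hip K x (A i y)"
  using adjD_ip[OF adjV] by blast
lemma ipV[simp]: "i \<in> {1..n} \<Longrightarrow> x \<in> C \<Longrightarrow> y \<in> C \<Longrightarrow> hip K (V i x) (V i y) = hip K x y"
  using iso_ip[OF isoV] by blast
lemma normV[simp]: "i \<in> {1..n} \<Longrightarrow> x \<in> C \<Longrightarrow> hnorm K (V i x) = hnorm K x"
  using iso_norm[OF isoV] by blast
lemma normA: "i \<in> {1..n} \<Longrightarrow> x \<in> C \<Longrightarrow> hnorm K (A i x) \<le> hnorm K x"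
  using adj_contr[OF isoV adjV] by blast

lemma rel: "i \<in> {1..n} \<Longrightarrow> j \<in> {1..n} \<Longrightarrow> i \<noteq> j \<Longrightarrow> x \<in> C \<Longrightarrow>
    A i (V j x) = hscale K (cnj (z i j)) (V j (A i x))"
  using dnc by (simp add: dnc_isometries_def)

lemma z1: "i \<in> {1..n} \<Longrightarrow> j \<in> {1..n} \<Longrightarrow> i \<noteq> j \<Longrightarrow> cnj (z i j) * z i j = 1"
proof -
  assume "i \<in> {1..n}" "j \<in> {1..n}" "i \<noteq> j"
  then have "cmod (z i j) = 1" using zc by blast
  then have "z i j * cnj (z i j) = 1" using complex_norm_square[of "z i j"] by simp
  then show ?thesis by (simp add: mult.commute)
qed
lemma z1': "i \<in> {1..n} \<Longrightarrow> j \<in> {1..n} \<Longrightarrow> i \<noteq> j \<Longrightarrow> z i j * cnj (z i j) = 1"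
  using z1 by (simp add: mult.commute)
lemma zsym: "i \<in> {1..n} \<Longrightarrow> j \<in> {1..n} \<Longrightarrow> i \<noteq> j \<Longrightarrow> z j i = cnj (z i j)"
  using zc by blast

lemma ip_self_cnj: "x \<in> C \<Longrightarrow> cnj (hip K x x) = hip K x x"
  using ip_sym[of x x] by simp

lemma comm: assumes i: "i \<in> {1..n}" and j: "j \<in> {1..n}" and ij: "i \<noteq> j" and x: "x \<in> C"
  shows "V i (V j x) = hscale K (z i j) (V j (V i x))"
proof -
  define u where "u = V i (V j x)"
  define w where "w = V j (V i x)"
  have uC: "u \<in> C" and wC: "w \<in> C" using u_def w_def i j x by auto
  have uu: "hip K u u = hip K x x" using u_def i j x by simp
  have ww: "hip K w w = hip K x x" using w_def i j x by simp
  have uw: "hip K u w = z i j * hip K x x"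
  proof -
    have "hip K u w = hip K (V j x) (A i w)" unfolding u_def using ipA i j x wC by simp
    also have "A i w = hscale K (cnj (z i j)) (V j x)" unfolding w_def using rel[OF i j ij, of "V i x"] i j x by simp
    finally show ?thesis using i j x by simp
  qed
  have wu: "hip K w u = cnj (z i j) * hip K x x"
    using ip_sym[OF uC wC] uw ip_self_cnj[OF x] by simp
  have "hip K (hminus K u (hscale K (z i j) w)) (hminus K u (hscale K (z i j) w))
      = hip K u u - cnj (z i j) * hip K u w - z i j * hip K w u + z i j * cnj (z i j) * hip K w w"
    using uC wC by (simp add: algebra_simps)
  also have "\<dots> = hip K x x * (1 - cnj (z i j) * z i j)"
    using uu ww uw wu by (simp add: algebra_simps)
  also have "\<dots> = 0" using z1[OF i j ij] by simp
  finally have "hminus K u (hscale K (z i j) w) = hzero K" using ip_def0 uC wC by simp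
  then show ?thesis using eq_of_minus uC wC u_def w_def by simp
qed

end

context step begin

definition "Dsp = {x \<in> C. A p x = hzero K}"
definition "PD h = hminus K h (V p (A p h))"
definition "Kc = {f \<in> hcarrier L. \<forall>k. f (Suc k) \<in> Dsp}"
definition "K2 = subsp L Kc"
definition "Jm x = (\<lambda>k::nat. if k = 0 then x else hzero K)"
definition "Um f = (\<lambda>k. if k = 0 then hadd K (V p (f 0)) (f 1) else f (Suc k))"
definition "Um' f = (\<lambda>k. if k = 0 then A p (f 0) else if k = 1 then PD (f 0) else f (k - 1))"
definition "Wm j f = (\<lambda>k. hscale K ((z p j)^k) (V j (f k)))"
definition "Wm' j f = (\<lambda>k. hscale K ((cnj (z p j))^k) (A j (f k)))"

lemma pn[simp]: "p \<in> {1..n}" using p .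
lemma p_ge[simp]: "Suc 0 \<le> p" using p by simp
lemma p_le[simp]: "p \<le> n" using p by simp

lemma D_C: "x \<in> Dsp \<Longrightarrow> x \<in> C" by (simp add: Dsp_def)
lemma D_A: "x \<in> Dsp \<Longrightarrow> A p x = hzero K" by (simp add: Dsp_def)
lemma D_zero: "hzero K \<in> Dsp" by (simp add: Dsp_def)
lemma D_add: "x \<in> Dsp \<Longrightarrow> y \<in> Dsp \<Longrightarrow> hadd K x y \<in> Dsp" by (simp add: Dsp_def)
lemma D_scale: "x \<in> Dsp \<Longrightarrow> hscale K a x \<in> Dsp" by (simp add: Dsp_def)

lemma D_closed: assumes f: "\<forall>k. f k \<in> Dsp" and x: "x \<in> C" and lim: "(\<lambda>k. hdist K (f k) x) \<longlonglongrightarrow> 0"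
  shows "x \<in> Dsp"
proof -
  have fC: "f k \<in> C" for k using f D_C by blast
  have le: "hnorm K (A p x) \<le> hdist K (f k) x" for k
  proof -
    have "A p x = hminus K (A p x) (A p (f k))" using f D_A fC x by (simp add: hminus_def)
    also have "\<dots> = A p (hminus K x (f k))" using fC x by simp
    finally have "hnorm K (A p x) = hnorm K (A p (hminus K x (f k)))" by simp
    also have "\<dots> \<le> hnorm K (hminus K x (f k))" using normA[of p "hminus K x (f k)"] fC x by simp
    also have "\<dots> = hdist K (f k) x" using hdist_sym fC x by (simp add: hdist_def)
    finally show ?thesis .
  qed
  have "hnorm K (A p x) \<le> 0" using lim le by (intro tendsto_lowerbound) (auto intro: always_eventually)
  then have "hnorm K (A p x) = 0" using hnorm_nonneg[of "A p x"] x by simp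
  then show ?thesis using hnorm_zero_iff x by (simp add: Dsp_def)
qed

lemma PD_in: "h \<in> C \<Longrightarrow> PD h \<in> Dsp"
  unfolding PD_def Dsp_def by simp
lemma PD_C: "h \<in> C \<Longrightarrow> PD h \<in> C" using PD_in D_C by blast

lemma VD: assumes j: "j \<in> {1..n}" "j \<noteq> p" and x: "x \<in> Dsp" shows "V j x \<in> Dsp"
proof -
  have xC: "x \<in> C" using x D_C by blast
  have "A p (V j x) = hscale K (cnj (z p j)) (V j (A p x))" using rel[of p j x] j xC by auto
  then show ?thesis using x j xC unfolding Dsp_def by simp
qed

lemma AD: assumes j: "j \<in> {1..n}" "j \<noteq> p" and x: "x \<in> Dsp" shows "A j x \<in> Dsp"
proof -
  have xC: "x \<in> C" using x D_C by blast
  have "A p (A j x) = hzero K"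
  proof (rule vec_eqI2)
    show "A p (A j x) \<in> C" "hzero K \<in> C" using xC j by auto
  next
    fix w assume w: "w \<in> C"
    have "hip K w (A p (A j x)) = hip K (V p w) (A j x)" using ipA[of p w "A j x"] w xC j by simp
    also have "\<dots> = hip K (V j (V p w)) x" using ipA[of j "V p w" x] w xC j by simp
    also have "\<dots> = hip K (hscale K (z j p) (V p (V j w))) x" using comm[of j p w] w j by simp
    also have "\<dots> = z j p * hip K (V j w) (A p x)" using ipA[of p "V j w" x] w j xC by simp
    also have "\<dots> = 0" using D_A[OF x] w j by simp
    finally show "hip K w (A p (A j x)) = hip K w (hzero K)" using w by simp
  qed
  then show ?thesis using xC j unfolding Dsp_def by simp
qed

lemma Kc_iff: "f \<in> Kc \<longleftrightarrow> (\<forall>k. f k \<in> C) \<and> summable (\<lambda>k. (hnorm K (f k))^2) \<and> (\<forall>k. f (Suc k) \<in> Dsp)"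
  by (simp add: Kc_def)

lemma K2_simps[simp]: "hcarrier K2 = Kc" "hadd K2 = hadd L" "hscale K2 = hscale L" "hzero K2 = hzero L"
  "hip K2 = hip L" "hnorm K2 = hnorm L" "hdist K2 = hdist L" "hminus K2 = hminus L"
  by (simp_all add: K2_def)

lemma Kc_closed: "closed_subspace L Kc"
  unfolding closed_subspace_def
proof (intro conjI allI ballI impI)
  show "Kc \<subseteq> hcarrier L" by (auto simp: Kc_def)
  show "hzero L \<in> Kc" by (simp add: Kc_def D_zero)
next
  fix x y assume "x \<in> Kc" "y \<in> Kc"
  then show "hadd L x y \<in> Kc" using l2_add_in' D_add unfolding Kc_def by simp
next
  fix a x assume "x \<in> Kc"
  then show "hscale L a x \<in> Kc" using l2_scale_in' D_scale unfolding Kc_def by simp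
next
  fix F :: "nat \<Rightarrow> nat \<Rightarrow> 'b" and g assume h: "(\<forall>m. F m \<in> Kc) \<and> g \<in> hcarrier L \<and> (\<lambda>m. hdist L (F m) g) \<longlonglongrightarrow> 0"
  have FL: "F m \<in> hcarrier L" for m using h unfolding Kc_def by blast
  have gL: "g \<in> hcarrier L" using h by blast
  have "g (Suc k) \<in> Dsp" for k
  proof (rule D_closed)
    show "\<forall>m. F m (Suc k) \<in> Dsp" using h unfolding Kc_def by blast
    show "g (Suc k) \<in> C" using gL by simp
    show "(\<lambda>m. hdist K (F m (Suc k)) (g (Suc k))) \<longlonglongrightarrow> 0"
    proof (rule tendsto_sandwich[of "\<lambda>m. 0" _ _ "\<lambda>m. hdist L (F m) g"])
      show "\<forall>\<^sub>F m in sequentially. 0 \<le> hdist K (F m (Suc k)) (g (Suc k))"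
        using hdist_nonneg FL gL by (intro always_eventually) simp
      show "\<forall>\<^sub>F m in sequentially. hdist K (F m (Suc k)) (g (Suc k)) \<le> hdist L (F m) g"
        using comp_dist_le[OF FL gL] by (intro always_eventually) blast
      show "(\<lambda>m. 0::real) \<longlonglongrightarrow> 0" by simp
      show "(\<lambda>m. hdist L (F m) g) \<longlonglongrightarrow> 0" using h by blast
    qed
  qed
  then show "g \<in> Kc" using gL unfolding Kc_def by blast
qed

lemma K2_chilbert: "chilbert K2"
  unfolding K2_def by (rule subsp_chilbert[OF l2_chilbert Kc_closed])

end


context hs begin
lemma iso_of_adj: assumes T: "lin_op K T" and A: "is_adjoint K T T'" and l: "\<And>x. x \<in> C \<Longrightarrow> T' (T x) = x"
  shows "isometry K T"
  unfolding isometry_def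
proof (intro conjI ballI)
  show "lin_op K T" by (rule T)
  fix x assume x: "x \<in> C"
  have "hip K (T x) (T x) = hip K x x" using adjD_ip[OF A, of x "T x"] l[OF x] x lin_in[OF T x] by simp
  then show "hnorm K (T x) = hnorm K x" by (simp add: hnorm_def)
qed
lemma unitary_of_adj: assumes T: "lin_op K T" and A: "is_adjoint K T T'" and l: "\<And>x. x \<in> C \<Longrightarrow> T' (T x) = x"
  and r: "\<And>x. x \<in> C \<Longrightarrow> T (T' x) = x"
  shows "unitary K T"
  unfolding unitary_def
proof
  show "isometry K T" by (rule iso_of_adj[OF T A l])
  show "T ` C = C"
  proof
    show "T ` C \<subseteq> C" using lin_in[OF T] by auto
    show "C \<subseteq> T ` C"
    proof
      fix y assume y: "y \<in> C"
      then have "y = T (T' y)" using r by simp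
      moreover have "T' y \<in> C" using adjD_in[OF A y] .
      ultimately show "y \<in> T ` C" by blast
    qed
  qed
qed
end

lemma split2: fixes s :: "nat \<Rightarrow> complex"
  assumes "summable s" shows "suminf s = s 0 + s 1 + (\<Sum>k. s (Suc (Suc k)))"
proof -
  have s1: "summable (\<lambda>k. s (Suc k))" using assms summable_Suc_iff by blast
  have "(\<Sum>k. s (Suc (Suc k))) = (\<Sum>k. s (Suc k)) - s 1" using suminf_split_head[OF s1] by simp
  also have "\<dots> = suminf s - s 0 - s 1" using suminf_split_head[OF assms] by simp
  finally show ?thesis by (simp add: algebra_simps)
qed

lemma split1: fixes s :: "nat \<Rightarrow> complex"
  assumes "summable s" shows "suminf s = s 0 + (\<Sum>k. s (Suc k))"
  using suminf_split_head[OF assms] by (simp add: algebra_simps)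

lemma sumSuc: "summable (\<lambda>k. f (Suc k)) \<Longrightarrow> summable (f :: nat \<Rightarrow> real)"
  by (simp only: summable_Suc_iff)
lemma sumSuc': "summable (f :: nat \<Rightarrow> real) \<Longrightarrow> summable (\<lambda>k. f (Suc k))"
  by (simp only: summable_Suc_iff)

context step begin

lemma Kc_C: "f \<in> Kc \<Longrightarrow> f k \<in> C" by (simp add: Kc_iff)
lemma Kc_D: "f \<in> Kc \<Longrightarrow> f (Suc k) \<in> Dsp" by (simp add: Kc_iff)
lemma Kc_L: "f \<in> Kc \<Longrightarrow> f \<in> hcarrier L" by (simp add: Kc_def)
lemma Kc_sum: "f \<in> Kc \<Longrightarrow> summable (\<lambda>k. (hnorm K (f k))^2)" by (simp add: Kc_iff)

lemma zpj: "j \<in> {1..n} \<Longrightarrow> j \<noteq> p \<Longrightarrow> cmod (z p j) = 1" using zc[rule_format, OF pn] by blast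

lemma J_in: assumes x: "x \<in> C" shows "Jm x \<in> Kc"
proof -
  have "summable (\<lambda>k. (hnorm K (Jm x (Suc k)))^2)" by (simp add: Jm_def)
  then have "summable (\<lambda>k. (hnorm K (Jm x k))^2)" by (rule sumSuc)
  then show ?thesis using x D_zero unfolding Kc_iff by (simp add: Jm_def)
qed

lemma U_in: assumes f: "f \<in> Kc" shows "Um f \<in> Kc"
proof -
  have "summable (\<lambda>k. (hnorm K (Um f k))^2)"
  proof -
    have "summable (\<lambda>k. (hnorm K (f (Suc (Suc k))))^2)"
      using sumSuc'[OF sumSuc'[OF Kc_sum[OF f]]] .
    then have "summable (\<lambda>k. (hnorm K (Um f (Suc k)))^2)" by (simp add: Um_def)
    then show ?thesis by (rule sumSuc)
  qed
  moreover have "\<forall>k. Um f k \<in> C" using Kc_C[OF f] by (simp add: Um_def)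
  moreover have "\<forall>k. Um f (Suc k) \<in> Dsp" using Kc_D[OF f] by (simp add: Um_def)
  ultimately show ?thesis by (simp add: Kc_iff)
qed

lemma U'_in: assumes f: "f \<in> Kc" shows "Um' f \<in> Kc"
proof -
  have "summable (\<lambda>k. (hnorm K (Um' f k))^2)"
  proof -
    have "summable (\<lambda>k. (hnorm K (f (Suc k)))^2)" using sumSuc'[OF Kc_sum[OF f]] .
    then have "summable (\<lambda>k. (hnorm K (Um' f (Suc (Suc k))))^2)" by (simp add: Um'_def)
    then show ?thesis by (rule sumSuc[OF sumSuc])
  qed
  moreover have "\<forall>k. Um' f k \<in> C" using Kc_C[OF f] PD_C by (simp add: Um'_def)
  moreover have "\<forall>k. Um' f (Suc k) \<in> Dsp"
  proof
    fix k show "Um' f (Suc k) \<in> Dsp"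
      using Kc_D[OF f] PD_in Kc_C[OF f] by (cases k) (auto simp: Um'_def)
  qed
  ultimately show ?thesis by (simp add: Kc_iff)
qed

lemma W_in: assumes j: "j \<in> {1..n}" "j \<noteq> p" and f: "f \<in> Kc" shows "Wm j f \<in> Kc"
proof -
  have n: "hnorm K (Wm j f k) = hnorm K (f k)" for k
    using hnorm_scale Kc_C[OF f] j zpj[OF j] by (simp add: Wm_def norm_power)
  have "\<forall>k. Wm j f k \<in> C" using Kc_C[OF f] j by (simp add: Wm_def)
  moreover have "\<forall>k. Wm j f (Suc k) \<in> Dsp" using Kc_D[OF f] VD[OF j] D_scale by (simp add: Wm_def)
  ultimately show ?thesis using Kc_sum[OF f] n by (simp add: Kc_iff)
qed

lemma W'_in: assumes j: "j \<in> {1..n}" "j \<noteq> p" and f: "f \<in> Kc" shows "Wm' j f \<in> Kc"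
proof -
  have n: "(hnorm K (Wm' j f k))^2 \<le> (hnorm K (f k))^2" for k
  proof -
    have "hnorm K (Wm' j f k) = hnorm K (A j (f k))"
      using hnorm_scale Kc_C[OF f] j zpj[OF j] by (simp add: Wm'_def norm_power)
    also have "\<dots> \<le> hnorm K (f k)" using normA j Kc_C[OF f] by simp
    finally show ?thesis using hnorm_nonneg Kc_C[OF f] j by (simp add: power_mono Wm'_def)
  qed
  have "summable (\<lambda>k. (hnorm K (Wm' j f k))^2)"
    by (rule summable_comparison_test'[OF Kc_sum[OF f]]) (use n in simp)
  moreover have "\<forall>k. Wm' j f k \<in> C" using Kc_C[OF f] j by (simp add: Wm'_def)
  moreover have "\<forall>k. Wm' j f (Suc k) \<in> Dsp" using Kc_D[OF f] AD[OF j] D_scale by (simp add: Wm'_def)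
  ultimately show ?thesis by (simp add: Kc_iff)
qed

end

context step begin

lemma K2_hs: "hs K2" by (rule hs.intro[OF K2_chilbert])

lemma hipK2: "hip K2 f g = (\<Sum>k. hip K (f k) (g k))" by simp

lemma orthD: assumes x: "x \<in> Dsp" and y: "y \<in> C" shows "hip K x (V p y) = 0"
proof -
  have xC: "x \<in> C" using x D_C by blast
  have "hip K (V p y) x = hip K y (A p x)" using ipA[of p y x] y xC by simp
  then have "hip K (V p y) x = 0" using D_A[OF x] y by simp
  then show ?thesis using ip_sym[of "V p y" x] y xC by simp
qed

lemma U_adj: "is_adjoint K2 Um Um'"
  unfolding is_adjoint_def K2_simps
proof (intro conjI ballI)
  fix y assume "y \<in> Kc" then show "Um' y \<in> Kc" by (rule U'_in)
next
  fix f g assume f: "f \<in> Kc" and g: "g \<in> Kc"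
  define a where "a = (\<lambda>k. hip K (Um f k) (g k))"
  define b where "b = (\<lambda>k. hip K (f k) (Um' g k))"
  have sa: "summable a" unfolding a_def using l2_ip_summable[OF Kc_L[OF U_in[OF f]] Kc_L[OF g]] .
  have sb: "summable b" unfolding b_def using l2_ip_summable[OF Kc_L[OF f] Kc_L[OF U'_in[OF g]]] .
  have tail: "(\<lambda>k. a (Suc k)) = (\<lambda>k. b (Suc (Suc k)))" by (simp add: a_def b_def Um_def Um'_def)
  have f0: "f 0 \<in> C" and f1: "f 1 \<in> C" and g0: "g 0 \<in> C" using Kc_C f g by auto
  have f1D: "f 1 \<in> Dsp" using Kc_D[OF f, of 0] by simp
  have "a 0 = hip K (V p (f 0)) (g 0) + hip K (f 1) (g 0)" using f0 f1 g0 by (simp add: a_def Um_def)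
  moreover have "b 0 = hip K (V p (f 0)) (g 0)" using ipA[of p "f 0" "g 0"] f0 g0 by (simp add: b_def Um'_def)
  moreover have "b 1 = hip K (f 1) (g 0)"
    using orthD[OF f1D, of "A p (g 0)"] f1 g0 by (simp add: b_def Um'_def PD_def)
  ultimately have h0: "a 0 = b 0 + b 1" by simp
  have "suminf a = suminf b" using split1[OF sa] split2[OF sb] tail h0 by simp
  then show "hip L (Um f) g = hip L f (Um' g)" by (simp add: a_def b_def)
qed

lemma U_left: assumes f: "f \<in> Kc" shows "Um' (Um f) = f"
proof
  fix k
  have f0: "f 0 \<in> C" and f1: "f 1 \<in> C" using Kc_C f by auto
  have f1D: "f 1 \<in> Dsp" using Kc_D[OF f, of 0] by simp
  show "Um' (Um f) k = f k"
  proof (cases k)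
    case 0 then show ?thesis using f0 f1 D_A[OF f1D] by (simp add: Um'_def Um_def)
  next
    case (Suc m)
    show ?thesis
    proof (cases m)
      case 0
      have "PD (hadd K (V p (f 0)) (f 1)) = f 1"
        unfolding PD_def using f0 f1 D_A[OF f1D] by (intro vec_eqI) simp_all
      then show ?thesis using Suc 0 by (simp add: Um'_def Um_def)
    next
      case (Suc r) then show ?thesis using \<open>k = Suc m\<close> by (simp add: Um'_def Um_def)
    qed
  qed
qed

lemma U_right: assumes g: "g \<in> Kc" shows "Um (Um' g) = g"
proof
  fix k
  have g0: "g 0 \<in> C" using Kc_C g by auto
  show "Um (Um' g) k = g k"
  proof (cases k)
    case 0
    have "hadd K (V p (A p (g 0))) (PD (g 0)) = g 0"
      unfolding PD_def using g0 by (intro vec_eqI) simp_all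
    then show ?thesis using 0 by (simp add: Um'_def Um_def)
  next
    case (Suc m) then show ?thesis by (simp add: Um'_def Um_def)
  qed
qed

lemma U_lin: "lin_op K2 Um"
  unfolding lin_op_def K2_simps
proof (intro conjI ballI allI)
  fix x assume "x \<in> Kc" then show "Um x \<in> Kc" by (rule U_in)
next
  fix x y assume x: "x \<in> Kc" and y: "y \<in> Kc"
  show "Um (hadd L x y) = hadd L (Um x) (Um y)"
  proof
    fix k
    have c: "x 0 \<in> C" "x 1 \<in> C" "y 0 \<in> C" "y 1 \<in> C" using Kc_C x y by auto
    show "Um (hadd L x y) k = hadd L (Um x) (Um y) k"
      using c by (cases k) (simp_all add: Um_def, intro vec_eqI, simp_all)
  qed
next
  fix a x assume x: "x \<in> Kc"
  show "Um (hscale L a x) = hscale L a (Um x)"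
  proof
    fix k
    have c: "x 0 \<in> C" "x 1 \<in> C" using Kc_C x by auto
    show "Um (hscale L a x) k = hscale L a (Um x) k"
      using c by (cases k) (simp_all add: Um_def, intro vec_eqI, simp_all add: algebra_simps)
  qed
qed

lemma U_unitary: "unitary K2 Um"
  by (rule hs.unitary_of_adj[OF K2_hs U_lin U_adj]) (simp_all add: U_left U_right)

lemma U_adj_eq: "f \<in> Kc \<Longrightarrow> adj K2 Um f = Um' f"
  using hs.adj_eq[OF K2_hs U_adj] by simp

lemma W_adj: assumes j: "j \<in> {1..n}" "j \<noteq> p" shows "is_adjoint K2 (Wm j) (Wm' j)"
  unfolding is_adjoint_def K2_simps
proof (intro conjI ballI)
  fix y assume "y \<in> Kc" then show "Wm' j y \<in> Kc" by (rule W'_in[OF j])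
next
  fix f g assume f: "f \<in> Kc" and g: "g \<in> Kc"
  have "hip K (Wm j f k) (g k) = hip K (f k) (Wm' j g k)" for k
    using ipA[of j "f k" "g k"] Kc_C[OF f] Kc_C[OF g] j by (simp add: Wm_def Wm'_def)
  then show "hip L (Wm j f) g = hip L f (Wm' j g)" by simp
qed

lemma W_left: assumes j: "j \<in> {1..n}" "j \<noteq> p" and f: "f \<in> Kc" shows "Wm' j (Wm j f) = f"
proof
  fix k
  have "(cnj (z p j))^k * (z p j)^k = 1"
    using z1[of p j] j by (simp add: power_mult_distrib[symmetric])
  then show "Wm' j (Wm j f) k = f k" using Kc_C[OF f] j by (simp add: Wm_def Wm'_def)
qed

lemma W_right: assumes j: "j \<in> {1..n}" "j \<noteq> p" and u: "unitary K (V j)" and g: "g \<in> Kc"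
  shows "Wm j (Wm' j g) = g"
proof
  fix k
  have "(z p j)^k * (cnj (z p j))^k = 1"
    using z1'[of p j] j by (simp add: power_mult_distrib[symmetric])
  moreover have "V j (A j (g k)) = g k" using unitary_right[OF u adjV] j Kc_C[OF g] by blast
  ultimately show "Wm j (Wm' j g) k = g k" using Kc_C[OF g] j by (simp add: Wm_def Wm'_def)
qed

lemma W_lin: assumes j: "j \<in> {1..n}" "j \<noteq> p" shows "lin_op K2 (Wm j)"
  unfolding lin_op_def K2_simps
proof (intro conjI ballI allI)
  fix x assume "x \<in> Kc" then show "Wm j x \<in> Kc" by (rule W_in[OF j])
next
  fix x y assume x: "x \<in> Kc" and y: "y \<in> Kc"
  show "Wm j (hadd L x y) = hadd L (Wm j x) (Wm j y)"
    using Kc_C[OF x] Kc_C[OF y] j by (simp add: Wm_def scale_add_distrib)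
next
  fix a x assume x: "x \<in> Kc"
  show "Wm j (hscale L a x) = hscale L a (Wm j x)"
    using Kc_C[OF x] j by (simp add: Wm_def mult.commute)
qed

lemma W_iso: assumes j: "j \<in> {1..n}" "j \<noteq> p" shows "isometry K2 (Wm j)"
  by (rule hs.iso_of_adj[OF K2_hs W_lin[OF j] W_adj[OF j]]) (simp add: W_left[OF j])

lemma W_unitary: assumes j: "j \<in> {1..n}" "j \<noteq> p" and u: "unitary K (V j)" shows "unitary K2 (Wm j)"
  by (rule hs.unitary_of_adj[OF K2_hs W_lin[OF j] W_adj[OF j]])
     (simp_all add: W_left[OF j] W_right[OF j u])

lemma W_adj_eq: "j \<in> {1..n} \<Longrightarrow> j \<noteq> p \<Longrightarrow> f \<in> Kc \<Longrightarrow> adj K2 (Wm j) f = Wm' j f"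
  using hs.adj_eq[OF K2_hs W_adj] by simp

end

context step begin

lemma relA: assumes i: "i \<in> {1..n}" "i \<noteq> p" and j: "j \<in> {1..n}" "j \<noteq> p" and ij: "i \<noteq> j"
  and f: "f \<in> Kc"
  shows "Wm' i (Wm j f) = hscale L (cnj (z i j)) (Wm j (Wm' i f))"
proof
  fix k
  have fk: "f k \<in> C" using Kc_C[OF f] .
  have r: "A i (V j (f k)) = hscale K (cnj (z i j)) (V j (A i (f k)))" using rel[OF i(1) j(1) ij fk] .
  show "Wm' i (Wm j f) k = hscale L (cnj (z i j)) (Wm j (Wm' i f)) k"
    using fk i j r by (simp add: Wm_def Wm'_def mult_ac)
qed

lemma relB: assumes j: "j \<in> {1..n}" "j \<noteq> p" and f: "f \<in> Kc"
  shows "Um' (Wm j f) = hscale L (cnj (z p j)) (Wm j (Um' f))"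
proof
  fix k
  have f0: "f 0 \<in> C" using Kc_C[OF f] .
  have zz: "cnj (z p j) * z p j = 1" using z1[of p j] j by simp
  have r: "A p (V j (f 0)) = hscale K (cnj (z p j)) (V j (A p (f 0)))" using rel[of p j "f 0"] j f0 by simp
  have c: "V p (V j y) = hscale K (z p j) (V j (V p y))" if "y \<in> C" for y using comm[of p j y] j that by simp
  show "Um' (Wm j f) k = hscale L (cnj (z p j)) (Wm j (Um' f)) k"
  proof (cases k)
    case 0 then show ?thesis using r f0 j by (simp add: Wm_def Um'_def)
  next
    case (Suc m)
    show ?thesis
    proof (cases m)
      case 0
      have "PD (V j (f 0)) = hscale K (cnj (z p j) * z p j) (V j (PD (f 0)))"
        unfolding PD_def zz using r c[of "A p (f 0)"] f0 j zz
        by (intro vec_eqI) (simp_all add: algebra_simps)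
      moreover have "V j (PD (f 0)) \<in> C" using PD_C f0 j by simp
      ultimately show ?thesis using Suc 0 f0 j by (simp add: Wm_def Um'_def)
    next
      case (Suc r')
      have fm: "f m \<in> C" using Kc_C[OF f] .
      have e2: "\<And>X. cnj (z p j) * (z p j * X) = X" by (metis zz mult.assoc mult_1)
      show ?thesis using \<open>k = Suc m\<close> Suc fm j by (simp add: Wm_def Um'_def e2)
    qed
  qed
qed

lemma relC: assumes i: "i \<in> {1..n}" "i \<noteq> p" and f: "f \<in> Kc"
  shows "Wm' i (Um f) = hscale L (cnj (z i p)) (Um (Wm' i f))"
proof
  fix k
  have f0: "f 0 \<in> C" and f1: "f 1 \<in> C" using Kc_C[OF f] by auto
  have zs: "cnj (z i p) = z p i" using zsym[of p i] i by simp
  have ww: "z p i * cnj (z p i) = 1" using z1'[of p i] i by simp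
  have r: "A i (V p (f 0)) = hscale K (z p i) (V p (A i (f 0)))" using rel[of i p "f 0"] i f0 zs by simp
  show "Wm' i (Um f) k = hscale L (cnj (z i p)) (Um (Wm' i f)) k"
  proof (cases k)
    case 0
    show ?thesis using 0 r f0 f1 i zs ww by (simp add: Wm'_def Um_def scale_add_distrib)
  next
    case (Suc m)
    have fk: "f (Suc (Suc m)) \<in> C" using Kc_C[OF f] .
    have e: "\<And>X. z p i * (cnj (z p i) * X) = X" by (metis ww mult.assoc mult_1)
    show ?thesis using Suc fk i zs by (simp add: Wm'_def Um_def e)
  qed
qed

definition "NV i = (if i = p then Um else Wm i)"

lemma NV_in: "i \<in> {1..n} \<Longrightarrow> f \<in> Kc \<Longrightarrow> NV i f \<in> Kc"
  using U_in W_in by (simp add: NV_def)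

lemma NV_iso: "i \<in> {1..n} \<Longrightarrow> isometry K2 (NV i)"
  using U_unitary W_iso by (auto simp: NV_def unitary_def)

lemma NV_dnc: "dnc_isometries K2 z n NV"
  unfolding dnc_isometries_def
proof (intro conjI ballI impI)
  fix i assume "i \<in> {1..n}" then show "isometry K2 (NV i)" by (rule NV_iso)
next
  fix i j f assume i: "i \<in> {1..n}" and j: "j \<in> {1..n}" and ij: "i \<noteq> j" and f: "f \<in> hcarrier K2"
  have fK: "f \<in> Kc" using f by simp
  show "adj K2 (NV i) (NV j f) = hscale K2 (cnj (z i j)) (NV j (adj K2 (NV i) f))"
  proof (cases "i = p")
    case True
    then have jp: "j \<noteq> p" using ij by simp
    show ?thesis using fK True jp j relB[OF j jp fK] U_adj_eq W_in[OF j jp fK] U'_in[OF fK]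
      by (simp add: NV_def)
  next
    case False
    show ?thesis
    proof (cases "j = p")
      case True
      show ?thesis using fK True False i relC[OF i False fK] W_adj_eq[OF i False] U_in[OF fK] W'_in[OF i False fK]
        by (simp add: NV_def)
    next
      case jp: False
      show ?thesis using fK jp False i j ij relA[OF i False j jp ij fK] W_adj_eq[OF i False]
          W_in[OF j jp fK] W'_in[OF i False fK]
        by (simp add: NV_def)
    qed
  qed
qed

lemma J_emb: "isometric_embedding K K2 Jm"
  unfolding isometric_embedding_def K2_simps
proof (intro conjI ballI allI)
  fix x assume "x \<in> C" then show "Jm x \<in> Kc" by (rule J_in)
next
  fix x y assume "x \<in> C" "y \<in> C"
  then show "Jm (hadd K x y) = hadd L (Jm x) (Jm y)" by (auto simp: Jm_def)
next
  fix a x assume "x \<in> C"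
  then show "Jm (hscale K a x) = hscale L a (Jm x)" by (auto simp: Jm_def)
next
  fix x y assume x: "x \<in> C" and y: "y \<in> C"
  have "hip L (Jm x) (Jm y) = (\<Sum>k\<in>{0}. hip K (Jm x k) (Jm y k))"
    unfolding l2_simps by (rule suminf_finite) (auto simp: Jm_def)
  then show "hip L (Jm x) (Jm y) = hip K x y" by (simp add: Jm_def)
qed

lemma NV_J: "i \<in> {1..n} \<Longrightarrow> x \<in> C \<Longrightarrow> NV i (Jm x) = Jm (V i x)"
  by (auto simp: NV_def Um_def Wm_def Jm_def)

lemma NA_J: "i \<in> {1..n} \<Longrightarrow> i \<noteq> p \<Longrightarrow> x \<in> C \<Longrightarrow> adj K2 (NV i) (Jm x) = Jm (A i x)"
  using W_adj_eq J_in by (auto simp: NV_def Wm'_def Jm_def)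

lemma NV_unitary: "i \<in> {1..n} \<Longrightarrow> unitary K (V i) \<Longrightarrow> unitary K2 (NV i)"
  using U_unitary W_unitary by (auto simp: NV_def)

end

lemma step_thm:
  fixes K :: "'b cspace" and V :: "nat \<Rightarrow> 'b \<Rightarrow> 'b"
  assumes ch: "chilbert K"
    and zc: "\<forall>i\<in>{1..n}. \<forall>j\<in>{1..n}. i \<noteq> j \<longrightarrow> cmod (z i j) = 1 \<and> z j i = cnj (z i j)"
    and dnc: "dnc_isometries K z n V" and p: "p \<in> {1..n}"
  shows "\<exists>(K2 :: (nat \<Rightarrow> 'b) cspace) J NV. chilbert K2 \<and> isometric_embedding K K2 J \<and>
     dnc_isometries K2 z n NV \<and> unitary K2 (NV p) \<and>
     (\<forall>i\<in>{1..n}. unitary K (V i) \<longrightarrow> unitary K2 (NV i)) \<and>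
     (\<forall>i\<in>{1..n}. \<forall>x\<in>hcarrier K. NV i (J x) = J (V i x)) \<and>
     (\<forall>i\<in>{1..n}. i \<noteq> p \<longrightarrow> (\<forall>x\<in>hcarrier K. adj K2 (NV i) (J x) = J (adj K (V i) x)))"
proof -
  interpret step K z n p V by (rule step.intro[OF hs.intro[OF ch]]) (unfold_locales; fact)
  show ?thesis
    using K2_chilbert J_emb NV_dnc NV_unitary[OF pn] U_unitary NV_unitary NV_J NA_J
    by (intro exI[of _ K2] exI[of _ Jm] exI[of _ NV]) (simp add: NV_def)
qed


definition tr :: "('b \<Rightarrow> 'c) \<Rightarrow> 'b cspace \<Rightarrow> 'c cspace" where
  "tr e K = \<lparr>hcarrier = e ` hcarrier K, hadd = (\<lambda>x y. e (hadd K (inv e x) (inv e y))),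
     hscale = (\<lambda>a x. e (hscale K a (inv e x))), hzero = e (hzero K),
     hip = (\<lambda>x y. hip K (inv e x) (inv e y))\<rparr>"

definition trop :: "('b \<Rightarrow> 'c) \<Rightarrow> ('b \<Rightarrow> 'b) \<Rightarrow> 'c \<Rightarrow> 'c" where
  "trop e T = (\<lambda>y. e (T (inv e y)))"

lemma tr_simps: "hcarrier (tr e K) = e ` hcarrier K" "hadd (tr e K) x y = e (hadd K (inv e x) (inv e y))"
  "hscale (tr e K) a x = e (hscale K a (inv e x))" "hzero (tr e K) = e (hzero K)"
  "hip (tr e K) x y = hip K (inv e x) (inv e y)"
  by (simp_all add: tr_def)

locale trans = hs K for K :: "'b cspace" +
  fixes e :: "'b \<Rightarrow> 'c"
  assumes inj: "inj e"
begin

abbreviation "T \<equiv> tr e K"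

lemma ie[simp]: "inv e (e x) = x" using inj by (simp add: inv_f_f)

lemma trC: "y \<in> hcarrier T \<longleftrightarrow> (\<exists>x\<in>C. y = e x)" by (auto simp: tr_simps)
lemma tr_add[simp]: "hadd T (e x) (e y) = e (hadd K x y)" by (simp add: tr_simps)
lemma tr_scale[simp]: "hscale T a (e x) = e (hscale K a x)" by (simp add: tr_simps)
lemma tr_zero[simp]: "hzero T = e (hzero K)" by (simp add: tr_simps)
lemma tr_ip[simp]: "hip T (e x) (e y) = hip K x y" by (simp add: tr_simps)
lemma tr_carrier[simp]: "hcarrier T = e ` C" by (simp add: tr_simps)
lemma tr_norm[simp]: "hnorm T (e x) = hnorm K x" by (simp add: hnorm_def)
lemma tr_minus[simp]: "hminus T (e x) (e y) = e (hminus K x y)" by (simp add: hminus_def)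
lemma tr_dist[simp]: "hdist T (e x) (e y) = hdist K x y" by (simp add: hdist_def)
lemma e_eq[simp]: "e x = e y \<longleftrightarrow> x = y" using inj by (auto dest: injD)

lemma tr_chilbert: "chilbert T"
  unfolding chilbert_def Let_def tr_carrier
proof (intro conjI)
  show "\<forall>f. (\<forall>k. f k \<in> e ` C) \<and> (\<forall>ea>0. \<exists>N. \<forall>m\<ge>N. \<forall>k\<ge>N. hdist T (f m) (f k) < ea) \<longrightarrow>
        (\<exists>x\<in>e ` C. (\<lambda>k. hdist T (f k) x) \<longlonglongrightarrow> 0)"
  proof (intro allI impI)
    fix f :: "nat \<Rightarrow> 'c" assume h: "(\<forall>k. f k \<in> e ` C) \<and> (\<forall>ea>0. \<exists>N. \<forall>m\<ge>N. \<forall>k\<ge>N. hdist T (f m) (f k) < ea)"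
    define g where "g = (\<lambda>k. inv e (f k))"
    have fg: "f k = e (g k)" for k
    proof -
      obtain x where "f k = e x" using h by blast
      then show ?thesis using g_def by simp
    qed
    have gC: "\<forall>k. g k \<in> C"
    proof
      fix k obtain x where "x \<in> C" "f k = e x" using h by blast
      then show "g k \<in> C" using g_def by simp
    qed
    have "\<forall>ea>0. \<exists>N. \<forall>m\<ge>N. \<forall>k\<ge>N. hdist K (g m) (g k) < ea" using h fg by simp
    then obtain x where x: "x \<in> C" "(\<lambda>k. hdist K (g k) x) \<longlonglongrightarrow> 0" using complete gC by blast
    then show "\<exists>x\<in>e ` C. (\<lambda>k. hdist T (f k) x) \<longlonglongrightarrow> 0" using fg by (intro bexI[of _ "e x"]) auto
  qed
next
  show "hzero T \<in> e ` C" by simp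
  show "\<forall>x\<in>e ` C. \<forall>y\<in>e ` C. hadd T x y \<in> e ` C" by simp
  show "\<forall>a. \<forall>x\<in>e ` C. hscale T a x \<in> e ` C" by simp
  show "\<forall>x\<in>e ` C. \<forall>y\<in>e ` C. \<forall>z\<in>e ` C. hadd T (hadd T x y) z = hadd T x (hadd T y z)"
    by (simp add: add_assoc)
  show "\<forall>x\<in>e ` C. \<forall>y\<in>e ` C. hadd T x y = hadd T y x" by (simp add: add_comm)
  show "\<forall>x\<in>e ` C. hadd T x (hzero T) = x" by simp
  show "\<forall>x\<in>e ` C. hadd T x (hscale T (- 1) x) = hzero T" by (simp add: add_neg)
  show "\<forall>x\<in>e ` C. hscale T 1 x = x" by simp
  show "\<forall>a b. \<forall>x\<in>e ` C. hscale T a (hscale T b x) = hscale T (a * b) x" by simp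
  show "\<forall>a b. \<forall>x\<in>e ` C. hscale T (a + b) x = hadd T (hscale T a x) (hscale T b x)"
    by (simp add: add_scale_distrib)
  show "\<forall>a. \<forall>x\<in>e ` C. \<forall>y\<in>e ` C. hscale T a (hadd T x y) = hadd T (hscale T a x) (hscale T a y)"
    by (simp add: scale_add_distrib)
  show "\<forall>x\<in>e ` C. \<forall>y\<in>e ` C. \<forall>z\<in>e ` C. hip T (hadd T x y) z = hip T x z + hip T y z" by simp
  show "\<forall>a. \<forall>x\<in>e ` C. \<forall>y\<in>e ` C. hip T (hscale T a x) y = a * hip T x y" by simp
  show "\<forall>x\<in>e ` C. \<forall>y\<in>e ` C. hip T y x = cnj (hip T x y)" by (simp add: ip_cnj)
  show "\<forall>x\<in>e ` C. Im (hip T x x) = 0 \<and> 0 \<le> Re (hip T x x)" by (simp add: ip_Im ip_Re)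
  have "\<forall>x\<in>C. hip K x x = 0 \<longrightarrow> x = hzero K" using ip_def0 by blast
  then show "\<forall>x\<in>e ` C. hip T x x = 0 \<longrightarrow> x = hzero T" by simp
qed

end


context trans begin

lemma trop_e[simp]: "trop e S (e x) = e (S x)" by (simp add: trop_def)

lemma T_hs: "hs T" by (rule hs.intro[OF tr_chilbert])

lemma tr_lin: assumes S: "lin_op K S" shows "lin_op T (trop e S)"
  unfolding lin_op_def using S by (auto simp: lin_op_def)

lemma tr_iso: assumes S: "isometry K S" shows "isometry T (trop e S)"
  using S tr_lin unfolding isometry_def by auto

lemma tr_unitary: assumes S: "unitary K S" shows "unitary T (trop e S)"
proof -
  have "trop e S ` (e ` C) = e ` (S ` C)" by (auto simp: image_iff)
  then show ?thesis using S tr_iso unfolding unitary_def by simp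
qed

lemma tr_adjoint: assumes A: "is_adjoint K S A" shows "is_adjoint T (trop e S) (trop e A)"
  using A unfolding is_adjoint_def by auto

lemma tr_adj_eq: assumes S: "isometry K S" and y: "y \<in> C"
  shows "adj T (trop e S) (e y) = e (adj K S y)"
  using hs.adj_eq[OF T_hs tr_adjoint[OF iso_adjoint[OF S]]] y by simp

lemma tr_dnc: assumes d: "dnc_isometries K z n V" shows "dnc_isometries T z n (\<lambda>i. trop e (V i))"
  unfolding dnc_isometries_def
proof (intro conjI ballI impI)
  have iso: "i \<in> {1..n} \<Longrightarrow> isometry K (V i)" for i using d by (simp add: dnc_isometries_def)
  fix i assume "i \<in> {1..n}" then show "isometry T (trop e (V i))" using tr_iso iso by blast
next
  have iso: "i \<in> {1..n} \<Longrightarrow> isometry K (V i)" for i using d by (simp add: dnc_isometries_def)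
  fix i j y assume i: "i \<in> {1..n}" and j: "j \<in> {1..n}" and ij: "i \<noteq> j" and y: "y \<in> hcarrier T"
  obtain x where x: "x \<in> C" and yx: "y = e x" using y by auto
  have r: "adj K (V i) (V j x) = hscale K (cnj (z i j)) (V j (adj K (V i) x))"
    using d i j ij x by (simp add: dnc_isometries_def)
  have "V j x \<in> C" using iso_in[OF iso[OF j] x] .
  then show "adj T (trop e (V i)) (trop e (V j) y) =
        hscale T (cnj (z i j)) (trop e (V j) (adj T (trop e (V i)) y))"
    using yx x r tr_adj_eq[OF iso[OF i]] by simp
qed

lemma tr_emb: "isometric_embedding K T e"
  unfolding isometric_embedding_def by simp

end

lemma emb_comp: assumes J1: "isometric_embedding H K J" and J2: "isometric_embedding K K' J'"
  shows "isometric_embedding H K' (J' \<circ> J)"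
  using J1 J2 unfolding isometric_embedding_def by simp


definition e0 :: "'a \<Rightarrow> int list \<Rightarrow> 'a" where "e0 x = (\<lambda>_. x)"
definition e1 :: "(nat \<Rightarrow> int list \<Rightarrow> 'a) \<Rightarrow> int list \<Rightarrow> 'a" where
  "e1 g = (\<lambda>r. case r of [] \<Rightarrow> g 0 [] | k # r' \<Rightarrow> g (nat k) r')"

lemma inj_e0: "inj e0"
  by (rule injI) (simp add: e0_def fun_eq_iff)

lemma inj_e1: "inj e1"
proof (rule injI)
  fix g h :: "nat \<Rightarrow> int list \<Rightarrow> 'a" assume "e1 g = e1 h"
  then have "e1 g (int k # r) = e1 h (int k # r)" for k r by simp
  then have "g k r = h k r" for k r by (simp add: e1_def)
  then show "g = h" by (simp add: fun_eq_iff)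
qed

lemma emb_minus: assumes H: "chilbert H" and J: "isometric_embedding H K J"
  and a: "a \<in> hcarrier H" and b: "b \<in> hcarrier H"
  shows "J (hminus H a b) = hminus K (J a) (J b)"
proof -
  interpret hs H by (rule hs.intro[OF H])
  show ?thesis using J a b unfolding isometric_embedding_def hminus_def by simp
qed

lemma final6:
  assumes K: "chilbert K" and H: "chilbert H" and J: "isometric_embedding H K J"
    and Ui: "isometry K Ui" and Vi: "isometry H Vi"
    and UV: "\<forall>y\<in>hcarrier H. Ui (J y) = J (Vi y)" and x: "x \<in> hcarrier H"
  shows "J (adj H Vi x) = orth_proj K (J ` hcarrier H) (adj K Ui (J x))"
proof -
  interpret HH: hs H by (rule hs.intro[OF H])
  interpret KK: hs K by (rule hs.intro[OF K])
  have JC: "y \<in> hcarrier H \<Longrightarrow> J y \<in> hcarrier K" for y using J by (simp add: isometric_embedding_def)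
  have Jip: "y \<in> hcarrier H \<Longrightarrow> y' \<in> hcarrier H \<Longrightarrow> hip K (J y) (J y') = hip H y y'" for y y'
    using J by (simp add: isometric_embedding_def)
  have AH: "is_adjoint H Vi (adj H Vi)" using HH.iso_adjoint[OF Vi] .
  have AK: "is_adjoint K Ui (adj K Ui)" using KK.iso_adjoint[OF Ui] .
  define M where "M = J ` hcarrier H"
  define w where "w = adj K Ui (J x)"
  define p0 where "p0 = J (adj H Vi x)"
  have Ax: "adj H Vi x \<in> hcarrier H" using HH.adjD_in[OF AH x] .
  have wC: "w \<in> hcarrier K" using KK.adjD_in[OF AK JC[OF x]] w_def by simp
  have p0M: "p0 \<in> M" using Ax p0_def M_def by simp
  have p0C: "p0 \<in> hcarrier K" using JC[OF Ax] p0_def by simp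
  have MC: "M \<subseteq> hcarrier K" using JC M_def by auto
  have orth: "\<forall>m\<in>M. hip K (hminus K w p0) m = 0"
  proof
    fix m assume "m \<in> M"
    then obtain y where y: "y \<in> hcarrier H" and my: "m = J y" using M_def by auto
    have Vy: "Vi y \<in> hcarrier H" using HH.iso_in[OF Vi y] .
    have "hip K w m = hip K (J x) (Ui (J y))"
    proof -
      have "hip K (Ui (J y)) (J x) = hip K (J y) w" using KK.adjD_ip[OF AK JC[OF y] JC[OF x]] w_def by simp
      then show ?thesis using KK.ip_sym[OF JC[OF y] wC] KK.ip_sym[OF JC[OF x] KK.iso_in[OF Ui JC[OF y]]] my
        by (metis complex_cnj_cnj)
    qed
    also have "\<dots> = hip H x (Vi y)" using UV y Jip[OF x Vy] by simp
    finally have e1: "hip K w m = hip H x (Vi y)" .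
    have "hip K p0 m = hip H (adj H Vi x) y" using Jip[OF Ax y] p0_def my by simp
    also have "\<dots> = hip H x (Vi y)"
    proof -
      have "hip H (Vi y) x = hip H y (adj H Vi x)" using HH.adjD_ip[OF AH y x] .
      then show ?thesis using HH.ip_sym[OF y Ax] HH.ip_sym[OF Vy x] by (metis complex_cnj_cnj)
    qed
    finally have e2: "hip K p0 m = hip H x (Vi y)" .
    show "hip K (hminus K w p0) m = 0" using e1 e2 wC p0C JC[OF y] my by simp
  qed
  have ex: "\<exists>q. q \<in> M \<and> (\<forall>m\<in>M. hip K (hminus K w q) m = 0)" using p0M orth by blast
  define q where "q = orth_proj K M w"
  have q: "q \<in> M" "\<forall>m\<in>M. hip K (hminus K w q) m = 0"
    using someI_ex[OF ex] unfolding q_def orth_proj_def by blast+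
  have qC: "q \<in> hcarrier K" using q MC by auto
  have dM: "hminus K q p0 \<in> M"
  proof -
    obtain a where a: "a \<in> hcarrier H" "q = J a" using q M_def by auto
    have "hminus K q p0 = J (hminus H a (adj H Vi x))" using emb_minus[OF H J a(1) Ax] a p0_def by simp
    then show ?thesis using M_def a Ax by simp
  qed
  have "hip K (hminus K q p0) (hminus K q p0) =
        hip K (hminus K w p0) (hminus K q p0) - hip K (hminus K w q) (hminus K q p0)"
    using wC qC p0C by simp
  also have "\<dots> = 0" using orth q dM by simp
  finally have "q = p0" using KK.ip_def0 KK.eq_of_minus qC p0C by simp
  then show ?thesis using q_def p0_def w_def M_def by simp
qed


lemma chain:
  fixes H :: "'a cspace" and V :: "nat \<Rightarrow> 'a \<Rightarrow> 'a"
  assumes H: "chilbert H" and ln: "l \<le> n"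
    and zc: "\<forall>i\<in>{1..n}. \<forall>j\<in>{1..n}. i \<noteq> j \<longrightarrow> cmod (z i j) = 1 \<and> z j i = cnj (z i j)"
    and dnc: "dnc_isometries H z n V"
    and un: "\<forall>i\<in>{l+1..n}. unitary H (V i)"
  shows "m \<le> l \<Longrightarrow> \<exists>(K :: (int list \<Rightarrow> 'a) cspace) J U. chilbert K \<and> isometric_embedding H K J \<and>
     dnc_isometries K z n U \<and> (\<forall>i\<in>{1..m}. unitary K (U i)) \<and> (\<forall>i\<in>{l+1..n}. unitary K (U i)) \<and>
     (\<forall>i\<in>{1..n}. \<forall>x\<in>hcarrier H. U i (J x) = J (V i x)) \<and>
     (\<forall>i\<in>{l+1..n}. \<forall>x\<in>hcarrier H. adj K (U i) (J x) = J (adj H (V i) x))"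
proof (induction m)
  case 0
  interpret tr0: trans H e0 by (rule trans.intro[OF hs.intro[OF H]]) (unfold_locales, rule inj_e0)
  have isoV: "i \<in> {1..n} \<Longrightarrow> isometry H (V i)" for i using dnc by (simp add: dnc_isometries_def)
  show ?case
  proof (intro exI[of _ "tr e0 H"] exI[of _ e0] exI[of _ "\<lambda>i. trop e0 (V i)"] conjI)
    show "chilbert (tr e0 H)" by (rule tr0.tr_chilbert)
    show "isometric_embedding H (tr e0 H) e0" by (rule tr0.tr_emb)
    show "dnc_isometries (tr e0 H) z n (\<lambda>i. trop e0 (V i))" by (rule tr0.tr_dnc[OF dnc])
    show "\<forall>i\<in>{1..0}. unitary (tr e0 H) (trop e0 (V i))" by simp
    show "\<forall>i\<in>{l+1..n}. unitary (tr e0 H) (trop e0 (V i))" using un tr0.tr_unitary by blast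
    show "\<forall>i\<in>{1..n}. \<forall>x\<in>hcarrier H. trop e0 (V i) (e0 x) = e0 (V i x)" by simp
    show "\<forall>i\<in>{l+1..n}. \<forall>x\<in>hcarrier H. adj (tr e0 H) (trop e0 (V i)) (e0 x) = e0 (adj H (V i) x)"
      using tr0.tr_adj_eq isoV by auto
  qed
next
  case (Suc m)
  then obtain K :: "(int list \<Rightarrow> 'a) cspace" and J U where K: "chilbert K" and J: "isometric_embedding H K J"
    and d: "dnc_isometries K z n U" and u1: "\<forall>i\<in>{1..m}. unitary K (U i)"
    and u2: "\<forall>i\<in>{l+1..n}. unitary K (U i)"
    and UV: "\<forall>i\<in>{1..n}. \<forall>x\<in>hcarrier H. U i (J x) = J (V i x)"
    and UA: "\<forall>i\<in>{l+1..n}. \<forall>x\<in>hcarrier H. adj K (U i) (J x) = J (adj H (V i) x)" by auto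
  have p: "Suc m \<in> {1..n}" using Suc.prems ln by simp
  obtain K2 :: "(nat \<Rightarrow> int list \<Rightarrow> 'a) cspace" and J2 NV where K2: "chilbert K2"
    and J2: "isometric_embedding K K2 J2" and d2: "dnc_isometries K2 z n NV"
    and up: "unitary K2 (NV (Suc m))"
    and uu: "\<forall>i\<in>{1..n}. unitary K (U i) \<longrightarrow> unitary K2 (NV i)"
    and NU: "\<forall>i\<in>{1..n}. \<forall>x\<in>hcarrier K. NV i (J2 x) = J2 (U i x)"
    and NA: "\<forall>i\<in>{1..n}. i \<noteq> Suc m \<longrightarrow> (\<forall>x\<in>hcarrier K. adj K2 (NV i) (J2 x) = J2 (adj K (U i) x))"
    using step_thm[OF K zc d p] by blast
  interpret tr1: trans K2 e1 by (rule trans.intro[OF hs.intro[OF K2]]) (unfold_locales, rule inj_e1)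
  have JC: "x \<in> hcarrier H \<Longrightarrow> J x \<in> hcarrier K" for x using J by (simp add: isometric_embedding_def)
  have J2C: "x \<in> hcarrier K \<Longrightarrow> J2 x \<in> hcarrier K2" for x using J2 by (simp add: isometric_embedding_def)
  have isoNV: "i \<in> {1..n} \<Longrightarrow> isometry K2 (NV i)" for i using d2 by (simp add: dnc_isometries_def)
  have VC: "i \<in> {1..n} \<Longrightarrow> x \<in> hcarrier H \<Longrightarrow> V i x \<in> hcarrier H" for i x
    using dnc by (simp add: dnc_isometries_def isometry_def lin_op_def)
  have AC: "i \<in> {1..n} \<Longrightarrow> x \<in> hcarrier H \<Longrightarrow> adj H (V i) x \<in> hcarrier H" for i x
    using hs.adjD_in[OF hs.intro[OF H] hs.iso_adjoint[OF hs.intro[OF H]]] dnc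
    by (simp add: dnc_isometries_def)
  show ?case
  proof (intro exI[of _ "tr e1 K2"] exI[of _ "e1 \<circ> J2 \<circ> J"] exI[of _ "\<lambda>i. trop e1 (NV i)"] conjI)
    show "chilbert (tr e1 K2)" by (rule tr1.tr_chilbert)
    show "isometric_embedding H (tr e1 K2) (e1 \<circ> J2 \<circ> J)"
      using emb_comp[OF emb_comp[OF J J2] tr1.tr_emb] by (simp add: comp_assoc)
    show "dnc_isometries (tr e1 K2) z n (\<lambda>i. trop e1 (NV i))" by (rule tr1.tr_dnc[OF d2])
    show "\<forall>i\<in>{1..Suc m}. unitary (tr e1 K2) (trop e1 (NV i))"
    proof
      fix i assume i: "i \<in> {1..Suc m}"
      have "unitary K2 (NV i)"
      proof (cases "i = Suc m")
        case True then show ?thesis using up by simp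
      next
        case False then have "i \<in> {1..m}" using i by simp
        then show ?thesis using u1 uu Suc.prems ln by auto
      qed
      then show "unitary (tr e1 K2) (trop e1 (NV i))" by (rule tr1.tr_unitary)
    qed
    show "\<forall>i\<in>{l+1..n}. unitary (tr e1 K2) (trop e1 (NV i))"
      using u2 uu tr1.tr_unitary by auto
    show "\<forall>i\<in>{1..n}. \<forall>x\<in>hcarrier H. trop e1 (NV i) ((e1 \<circ> J2 \<circ> J) x) = (e1 \<circ> J2 \<circ> J) (V i x)"
      using NU UV JC by simp
    show "\<forall>i\<in>{l+1..n}. \<forall>x\<in>hcarrier H.
        adj (tr e1 K2) (trop e1 (NV i)) ((e1 \<circ> J2 \<circ> J) x) = (e1 \<circ> J2 \<circ> J) (adj H (V i) x)"
    proof (intro ballI)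
      fix i x assume i: "i \<in> {l+1..n}" and x: "x \<in> hcarrier H"
      have i1: "i \<in> {1..n}" and ip: "i \<noteq> Suc m" using i Suc.prems by auto
      have "adj (tr e1 K2) (trop e1 (NV i)) (e1 (J2 (J x))) = e1 (adj K2 (NV i) (J2 (J x)))"
        using tr1.tr_adj_eq[OF isoNV[OF i1] J2C[OF JC[OF x]]] .
      also have "\<dots> = e1 (J2 (adj K (U i) (J x)))" using NA i1 ip JC[OF x] by simp
      also have "\<dots> = e1 (J2 (J (adj H (V i) x)))" using UA i x by simp
      finally show "adj (tr e1 K2) (trop e1 (NV i)) ((e1 \<circ> J2 \<circ> J) x) = (e1 \<circ> J2 \<circ> J) (adj H (V i) x)"
        by simp
    qed
  qed
qed

theorem proposition6p1:
  fixes H :: "'a cspace"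
    and n l :: nat
    and z :: "nat \<Rightarrow> nat \<Rightarrow> complex"
    and V :: "nat \<Rightarrow> 'a \<Rightarrow> 'a"
  assumes "chilbert H"
    and "l \<le> n"
    and "\<forall>i\<in>{1..n}. \<forall>j\<in>{1..n}. i \<noteq> j \<longrightarrow> cmod (z i j) = 1 \<and> z j i = cnj (z i j)"
    and "dnc_isometries H z n V"
    and "\<forall>i\<in>{1..l}. pure_isometry H (V i)"
    and "\<forall>i\<in>{l+1..n}. unitary H (V i)"
  shows "\<exists>(K :: (int list \<Rightarrow> 'a) cspace) J U.
           chilbert K \<and> isometric_embedding H K J \<and>
           (\<forall>i\<in>{1..n}. unitary K (U i)) \<and>
           dnc_isometries K z n U \<and>
           (\<forall>i\<in>{1..n}. \<forall>x\<in>hcarrier H. U i (J x) \<in> J ` hcarrier H) \<and>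
           (\<forall>i\<in>{1..n}. \<forall>x\<in>hcarrier H. U i (J x) = J (V i x)) \<and>
           (\<forall>i\<in>{l+1..n}. \<forall>x\<in>hcarrier H. adj K (U i) (J x) \<in> J ` hcarrier H) \<and>
           (\<forall>i\<in>{l+1..n}. \<forall>x\<in>hcarrier H. adj K (U i) (J x) = J (adj H (V i) x)) \<and>
           (\<forall>i\<in>{1..l}. \<forall>x\<in>hcarrier H.
              J (adj H (V i) x) = orth_proj K (J ` hcarrier H) (adj K (U i) (J x)))"
proof -
  note H = assms(1) and ln = assms(2) and zc = assms(3) and dnc = assms(4) and un = assms(6)
  obtain K :: "(int list \<Rightarrow> 'a) cspace" and J U where K: "chilbert K" and J: "isometric_embedding H K J"
    and d: "dnc_isometries K z n U" and u1: "\<forall>i\<in>{1..l}. unitary K (U i)"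
    and u2: "\<forall>i\<in>{l+1..n}. unitary K (U i)"
    and UV: "\<forall>i\<in>{1..n}. \<forall>x\<in>hcarrier H. U i (J x) = J (V i x)"
    and UA: "\<forall>i\<in>{l+1..n}. \<forall>x\<in>hcarrier H. adj K (U i) (J x) = J (adj H (V i) x)"
    using chain[OF H ln zc dnc un, of l] by blast
  have isoV: "i \<in> {1..n} \<Longrightarrow> isometry H (V i)" for i using dnc by (simp add: dnc_isometries_def)
  have isoU: "i \<in> {1..n} \<Longrightarrow> isometry K (U i)" for i using d by (simp add: dnc_isometries_def)
  have VC: "i \<in> {1..n} \<Longrightarrow> x \<in> hcarrier H \<Longrightarrow> V i x \<in> hcarrier H" for i x
    using isoV by (simp add: isometry_def lin_op_def)
  have AC: "i \<in> {1..n} \<Longrightarrow> x \<in> hcarrier H \<Longrightarrow> adj H (V i) x \<in> hcarrier H" for i x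
    using hs.adjD_in[OF hs.intro[OF H] hs.iso_adjoint[OF hs.intro[OF H] isoV]] by blast
  show ?thesis
  proof (intro exI[of _ K] exI[of _ J] exI[of _ U] conjI)
    show "chilbert K" by (rule K)
    show "isometric_embedding H K J" by (rule J)
    show "\<forall>i\<in>{1..n}. unitary K (U i)"
    proof
      fix i assume i: "i \<in> {1..n}"
      show "unitary K (U i)"
      proof (cases "i \<le> l")
        case True then show ?thesis using u1 i by simp
      next
        case False then show ?thesis using u2 i by simp
      qed
    qed
    show "dnc_isometries K z n U" by (rule d)
    show "\<forall>i\<in>{1..n}. \<forall>x\<in>hcarrier H. U i (J x) \<in> J ` hcarrier H" using UV VC by auto
    show "\<forall>i\<in>{1..n}. \<forall>x\<in>hcarrier H. U i (J x) = J (V i x)" by (rule UV)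
    show "\<forall>i\<in>{l+1..n}. \<forall>x\<in>hcarrier H. adj K (U i) (J x) \<in> J ` hcarrier H" using UA AC by auto
    show "\<forall>i\<in>{l+1..n}. \<forall>x\<in>hcarrier H. adj K (U i) (J x) = J (adj H (V i) x)" by (rule UA)
    show "\<forall>i\<in>{1..l}. \<forall>x\<in>hcarrier H. J (adj H (V i) x) = orth_proj K (J ` hcarrier H) (adj K (U i) (J x))"
    proof (intro ballI)
      fix i x assume i: "i \<in> {1..l}" and x: "x \<in> hcarrier H"
      have i1: "i \<in> {1..n}" using i ln by simp
      have "\<forall>y\<in>hcarrier H. U i (J y) = J (V i y)" using UV i1 by blast
      then show "J (adj H (V i) x) = orth_proj K (J ` hcarrier H) (adj K (U i) (J x))"
        using final6[OF K H J isoU[OF i1] isoV[OF i1] _ x] by blast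
    qed
  qed
qed


end
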